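(* Let $T>0$, $\xi\in C^{1+\beta}([0,T])$ with $\beta>1/2$, and $f\in C^{1/2}([0,T])$. Let $K(t,s)=\frac{\xi(t)-\xi(s)}{t-s}\frac{e^{-(\xi(t)-\xi(s))^2/(4(t-s))}}{(t-s)^{1/2}}$ for $0\le s<t\le T$, and let $G$ be the function associated with $K$ as in the context. Then the function $v(t)=\int_0^tG(t,s)f(s)\,ds$ belongs to $C^{1/2}([0,T])$.
   Context: Define $H_1(t,s)=K(t,s)\mathbf 1_{(0,t)}(s)$ for $(t,s)\in[0,T]^2$ and recursively $H_n(t,s)=\int_0^TH_{n-1}(t,z)H_1(z,s)\,dz$ for $n\ge2$; then $G(t,s)=\sum_{n\ge2}H_n(t,s)$, the series converging uniformly on $[0,T]\times[0,T]$. Equivalently, $K+G$ is the resolvent kernel of the Volterra operator $x\mapsto x(t)-\int_0^tK(t,s)x(s)ds$, i.e. $x(t)=L(x)(t)+\int_0^t(K(t,s)+G(t,s))L(x)(s)ds$. *)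

theory Defs
  imports "HOL-Analysis.Analysis"
begin

text \<open>On the compact interval [0,T] a finite Hoelder seminorm implies boundedness
  and continuity, so this is membership in C^alpha([0,T]).\<close>
definition hoelder_on :: "real \<Rightarrow> real set \<Rightarrow> (real \<Rightarrow> real) \<Rightarrow> bool" where
  "hoelder_on \<alpha> S f \<longleftrightarrow>
     (\<exists>C. \<forall>x\<in>S. \<forall>y\<in>S. \<bar>f x - f y\<bar> \<le> C * \<bar>x - y\<bar> powr \<alpha>)"

definition C1_hoelder_on :: "real \<Rightarrow> real set \<Rightarrow> (real \<Rightarrow> real) \<Rightarrow> bool" where
  "C1_hoelder_on \<beta> S f \<longleftrightarrow>
     (\<exists>f'. (\<forall>t\<in>S. (f has_real_derivative f' t) (at t within S)) \<and> hoelder_on \<beta> S f')"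

text \<open>The kernel K(t,s), for 0 <= s < t (set to 0 otherwise; only used for s < t).\<close>
definition kernK :: "(real \<Rightarrow> real) \<Rightarrow> real \<Rightarrow> real \<Rightarrow> real" where
  "kernK \<xi> t s = (if s < t then
      (\<xi> t - \<xi> s) / (t - s) * exp (- (((\<xi> t - \<xi> s)^2) / (4 * (t - s)))) / sqrt (t - s)
    else 0)"

definition H1 :: "(real \<Rightarrow> real) \<Rightarrow> real \<Rightarrow> real \<Rightarrow> real" where
  "H1 \<xi> t s = kernK \<xi> t s * indicator {0<..<t} s"

text \<open>Hsh \<xi> T n = H_(n+1).\<close>
primrec Hsh :: "(real \<Rightarrow> real) \<Rightarrow> real \<Rightarrow> nat \<Rightarrow> real \<Rightarrow> real \<Rightarrow> real" where
  "Hsh \<xi> T 0 t s = H1 \<xi> t s"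
| "Hsh \<xi> T (Suc n) t s = (LINT z:{0..T}|lborel. Hsh \<xi> T n t z * H1 \<xi> z s)"

text \<open>G(t,s) = sum_{n>=2} H_n(t,s).\<close>
definition Gres :: "(real \<Rightarrow> real) \<Rightarrow> real \<Rightarrow> real \<Rightarrow> real \<Rightarrow> real" where
  "Gres \<xi> T t s = (\<Sum>n. Hsh \<xi> T (Suc n) t s)"

end

theory Submission
  imports Defs
begin

lemma GC:
  fixes a b :: real
  assumes "a \<le> b" "continuous_on {a..b} F"
    "\<And>x. a < x \<Longrightarrow> x < b \<Longrightarrow> (F has_real_derivative f x) (at x)"
    "\<And>x. a < x \<Longrightarrow> x < b \<Longrightarrow> 0 \<le> f x"
  shows "(\<integral>\<^sup>+x. indicator {a<..<b} x * ennreal (f x) \<partial>lborel) = ennreal (F b - F a)"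
proof -
  have "(f has_integral F b - F a) {a..b}"
    by (rule fundamental_theorem_of_calculus_interior[OF assms(1,2)])
       (auto simp: has_real_derivative_iff_has_vector_derivative[symmetric] intro: assms(3))
  then have "(f has_integral F b - F a) {a<..<b}" by (simp add: has_integral_Icc_iff_Ioo)
  from nn_integral_has_integral_lebesgue[OF _ this] assms(4)
  have "integral\<^sup>N lborel (\<lambda>x. ennreal (indicator {a<..<b} x * f x)) = ennreal (F b - F a)"
    by auto
  moreover have "(\<lambda>x. ennreal (indicator {a<..<b} x * f x)) = (\<lambda>x. indicator {a<..<b} x * ennreal (f x))"
    by (auto simp: indicator_def fun_eq_iff)
  ultimately show ?thesis by simp
qed

lemma sqrt_sh_deriv:
  fixes c x :: real assumes "x < c"
  shows "((\<lambda>x. sqrt (c - x)) has_real_derivative - (inverse (sqrt (c - x)) / 2)) (at x)"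
proof -
  have "((\<lambda>x. sqrt (c - x)) has_real_derivative inverse (sqrt (c - x)) / 2 * (0 - 1)) (at x)"
    using assms by (intro DERIV_chain2[OF DERIV_real_sqrt] derivative_eq_intros refl) auto
  then show ?thesis by simp
qed

lemma sqrt_sh_deriv2:
  fixes c x :: real assumes "c < x"
  shows "((\<lambda>x. sqrt (x - c)) has_real_derivative inverse (sqrt (x - c)) / 2) (at x)"
proof -
  have "((\<lambda>x. sqrt (x - c)) has_real_derivative inverse (sqrt (x - c)) / 2 * (1 - 0)) (at x)"
    using assms by (intro DERIV_chain2[OF DERIV_real_sqrt] derivative_eq_intros refl) auto
  then show ?thesis by simp
qed

lemma A1:
  fixes a b :: real assumes "a \<le> b"
  shows "(\<integral>\<^sup>+x. indicator {a<..<b} x * ennreal (1 / sqrt (x - a)) \<partial>lborel) = ennreal (2 * sqrt (b - a))"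
proof -
  have d: "((\<lambda>x. 2 * sqrt (x - a)) has_real_derivative 1 / sqrt (x - a)) (at x)" if "a < x" for x
  proof -
    have "((\<lambda>x. 2 * sqrt (x - a)) has_real_derivative 2 * (inverse (sqrt (x - a)) / 2)) (at x)"
      using that by (intro DERIV_cmult sqrt_sh_deriv2)
    then show ?thesis by (simp add: inverse_eq_divide)
  qed
  have "(\<integral>\<^sup>+x. indicator {a<..<b} x * ennreal (1 / sqrt (x - a)) \<partial>lborel) = ennreal (2 * sqrt (b - a) - 2 * sqrt (a - a))"
    by (rule GC[OF assms]) (auto intro!: continuous_intros d)
  then show ?thesis by simp
qed

lemma A2:
  fixes a b :: real assumes "a \<le> b"
  shows "(\<integral>\<^sup>+x. indicator {a<..<b} x * ennreal (1 / sqrt (b - x)) \<partial>lborel) = ennreal (2 * sqrt (b - a))"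
proof -
  have d: "((\<lambda>x. - (2 * sqrt (b - x))) has_real_derivative 1 / sqrt (b - x)) (at x)" if "x < b" for x
  proof -
    have "((\<lambda>x. - (2 * sqrt (b - x))) has_real_derivative - (2 * (- (inverse (sqrt (b - x)) / 2)))) (at x)"
      using that by (intro DERIV_minus DERIV_cmult sqrt_sh_deriv)
    then show ?thesis by (simp add: inverse_eq_divide)
  qed
  have "(\<integral>\<^sup>+x. indicator {a<..<b} x * ennreal (1 / sqrt (b - x)) \<partial>lborel) = ennreal ((- (2 * sqrt (b - b))) - (- (2 * sqrt (b - a))))"
  proof (rule GC[OF assms])
    show "continuous_on {a..b} (\<lambda>x. - (2 * sqrt (b - x)))" by (intro continuous_intros)
  qed (auto intro: d)
  then show ?thesis by simp
qed

lemma d3: fixes t x :: real assumes that: "x < t"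
  shows "((\<lambda>x. 2 / sqrt (t - x)) has_real_derivative 1 / ((t - x) * sqrt (t - x))) (at x)"
proof -
  have ne: "sqrt (t - x) \<noteq> 0" using that by simp
  have D: "((\<lambda>x. 2 * inverse (sqrt (t - x))) has_real_derivative 2 * (- (- (inverse (sqrt (t - x)) / 2) * inverse (sqrt (t - x) ^ Suc (Suc 0))))) (at x)"
    by (rule DERIV_cmult[OF DERIV_inverse_fun[OF sqrt_sh_deriv[OF that] ne]])
  have s2: "sqrt (t - x) ^ Suc (Suc 0) = t - x" using that by (simp add: power2_eq_square[symmetric])
  have "2 * (- (- (inverse (sqrt (t - x)) / 2) * inverse (sqrt (t - x) ^ Suc (Suc 0)))) = inverse (sqrt (t - x)) * inverse (t - x)"
    unfolding s2 by simp
  also have "\<dots> = 1 / ((t - x) * sqrt (t - x))" by (simp add: inverse_eq_divide)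
  finally have eq: "2 * (- (- (inverse (sqrt (t - x)) / 2) * inverse (sqrt (t - x) ^ Suc (Suc 0)))) = 1 / ((t - x) * sqrt (t - x))" .
  have fe: "(\<lambda>x. 2 * inverse (sqrt (t - x))) = (\<lambda>x. 2 / sqrt (t - x))" by (simp add: divide_inverse)
  show ?thesis using D unfolding eq fe .
qed
lemma A3:
  fixes t t' :: real assumes "0 \<le> t'" "t' < t"
  shows "(\<integral>\<^sup>+x. indicator {0<..<t'} x * ennreal (1 / ((t - x) * sqrt (t - x))) \<partial>lborel) \<le> ennreal (2 / sqrt (t - t'))"
proof -
  note d = d3
  have "(\<integral>\<^sup>+x. indicator {0<..<t'} x * ennreal (1 / ((t - x) * sqrt (t - x))) \<partial>lborel) = ennreal (2 / sqrt (t - t') - 2 / sqrt (t - 0))"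
  proof (rule GC[OF assms(1)])
    have "\<forall>x\<in>{0..t'}. sqrt (t - x) \<noteq> 0" using assms by auto
    then show "continuous_on {0..t'} (\<lambda>x. 2 / sqrt (t - x))" by (intro continuous_intros) auto
    show "((\<lambda>x. 2 / sqrt (t - x)) has_real_derivative 1 / ((t - x) * sqrt (t - x))) (at x)" if "0 < x" "x < t'" for x
      using that assms by (intro d) auto
    show "0 \<le> 1 / ((t - x) * sqrt (t - x))" if "0 < x" "x < t'" for x
      using that assms by auto
  qed
  then show ?thesis using assms by (auto intro: ennreal_leI)
qed

lemma A4:
  fixes t t' :: real assumes "0 \<le> t'" "t' < t"
  shows "(\<integral>\<^sup>+x. indicator {0<..<t'} x * ennreal (1 / sqrt (t' - x) - 1 / sqrt (t - x)) \<partial>lborel) \<le> ennreal (2 * sqrt (t - t'))"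
proof -
  have d: "((\<lambda>x. 2 * sqrt (t - x) - 2 * sqrt (t' - x)) has_real_derivative 1 / sqrt (t' - x) - 1 / sqrt (t - x)) (at x)" if "x < t'" for x
  proof -
    have "((\<lambda>x. 2 * sqrt (t - x) - 2 * sqrt (t' - x)) has_real_derivative 2 * (- (inverse (sqrt (t - x)) / 2)) - 2 * (- (inverse (sqrt (t' - x)) / 2))) (at x)"
      using that assms by (intro DERIV_diff DERIV_cmult sqrt_sh_deriv) auto
    then show ?thesis by (simp add: inverse_eq_divide)
  qed
  have "(\<integral>\<^sup>+x. indicator {0<..<t'} x * ennreal (1 / sqrt (t' - x) - 1 / sqrt (t - x)) \<partial>lborel)
     = ennreal ((2 * sqrt (t - t') - 2 * sqrt (t' - t')) - (2 * sqrt (t - 0) - 2 * sqrt (t' - 0)))"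
  proof (rule GC[OF assms(1)])
    show "continuous_on {0..t'} (\<lambda>x. 2 * sqrt (t - x) - 2 * sqrt (t' - x))" by (intro continuous_intros)
    show "((\<lambda>x. 2 * sqrt (t - x) - 2 * sqrt (t' - x)) has_real_derivative 1 / sqrt (t' - x) - 1 / sqrt (t - x)) (at x)" if "0 < x" "x < t'" for x
      using that by (intro d) auto
    show "0 \<le> 1 / sqrt (t' - x) - 1 / sqrt (t - x)" if "0 < x" "x < t'" for x
      using that assms by (auto simp: frac_le)
  qed
  moreover have "sqrt t' \<le> sqrt t" using assms by simp
  ultimately show ?thesis using assms by (auto intro!: ennreal_leI)
qed

lemma A1c:
  fixes a b c :: real assumes "0 \<le> c" "a \<le> b"
  shows "(\<integral>\<^sup>+x. indicator {a<..<b} x * ennreal (c / sqrt (x - a)) \<partial>lborel) = ennreal (2 * c * sqrt (b - a))"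
proof -
  have "(\<lambda>x. indicator {a<..<b} x * ennreal (c / sqrt (x - a))) = (\<lambda>x. ennreal c * (indicator {a<..<b} x * ennreal (1 / sqrt (x - a))))"
    using assms by (auto simp: fun_eq_iff indicator_def ennreal_mult[symmetric])
  then have "(\<integral>\<^sup>+x. indicator {a<..<b} x * ennreal (c / sqrt (x - a)) \<partial>lborel) = ennreal c * ennreal (2 * sqrt (b - a))"
    using A1[OF assms(2)] by (simp add: nn_integral_cmult)
  then show ?thesis using assms by (simp add: ennreal_mult[symmetric] mult.assoc)
qed

lemma A2c:
  fixes a b c :: real assumes "0 \<le> c" "a \<le> b"
  shows "(\<integral>\<^sup>+x. indicator {a<..<b} x * ennreal (c / sqrt (b - x)) \<partial>lborel) = ennreal (2 * c * sqrt (b - a))"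
proof -
  have "(\<lambda>x. indicator {a<..<b} x * ennreal (c / sqrt (b - x))) = (\<lambda>x. ennreal c * (indicator {a<..<b} x * ennreal (1 / sqrt (b - x))))"
    using assms by (auto simp: fun_eq_iff indicator_def ennreal_mult[symmetric])
  then have "(\<integral>\<^sup>+x. indicator {a<..<b} x * ennreal (c / sqrt (b - x)) \<partial>lborel) = ennreal c * ennreal (2 * sqrt (b - a))"
    using A2[OF assms(2)] by (simp add: nn_integral_cmult)
  then show ?thesis using assms by (simp add: ennreal_mult[symmetric] mult.assoc)
qed

lemma const_Ioo:
  fixes a b :: real assumes "0 \<le> c" "a \<le> b"
  shows "(\<integral>\<^sup>+x. ennreal c * indicator {a<..<b} x \<partial>lborel) = ennreal (c * (b - a))"
  using assms by (simp add: nn_integral_cmult_indicator ennreal_mult)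

lemma key_ineq:
  fixes p q d :: real assumes pq: "0 < p" "0 < q" "p + q = d"
  shows "1 / (sqrt p * sqrt q) \<le> sqrt 2 / sqrt d * (1 / sqrt q + 1 / sqrt p)"
proof -
  have d: "0 < d" using pq by simp
  have h2: "sqrt 2 / sqrt d * sqrt (d/2) = 1" using d by (simp add: real_sqrt_divide)
  have m: "sqrt (d/2) \<le> sqrt p + sqrt q"
  proof (cases "p \<ge> d / 2")
    case True
    then have "sqrt (d/2) \<le> sqrt p" by simp
    then show ?thesis using pq by (intro add_increasing2) auto
  next
    case False
    then have "q \<ge> d / 2" using pq by auto
    then have "sqrt (d/2) \<le> sqrt q" by simp
    then show ?thesis using pq by (intro add_increasing) auto
  qed
  have "1 \<le> sqrt 2 / sqrt d * (sqrt p + sqrt q)"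
    using mult_left_mono[OF m, of "sqrt 2 / sqrt d"] h2 d by simp
  then have "1 / (sqrt p * sqrt q) \<le> (sqrt 2 / sqrt d * (sqrt p + sqrt q)) / (sqrt p * sqrt q)"
    using pq by (intro divide_right_mono) auto
  also have "\<dots> = sqrt 2 / sqrt d * ((sqrt p + sqrt q) / (sqrt p * sqrt q))" by simp
  also have "(sqrt p + sqrt q) / (sqrt p * sqrt q) = 1 / sqrt q + 1 / sqrt p"
    using pq by (simp add: add_divide_distrib)
  finally show ?thesis .
qed
locale kset =
  fixes \<xi> :: "real \<Rightarrow> real" and T M :: real
  assumes T_pos: "0 < T" and M_pos: "0 < M"
    and lip: "\<And>x y. \<bar>\<xi> x - \<xi> y\<bar> \<le> M * \<bar>x - y\<bar>"
begin

lemma xi_cont: "continuous_on UNIV \<xi>"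
  by (rule lipschitz_on_continuous_on[where L=M]) (auto simp: lipschitz_on_def dist_real_def lip less_imp_le[OF M_pos])

lemma xi_meas[measurable]: "\<xi> \<in> borel_measurable borel"
  by (rule borel_measurable_continuous_onI[OF xi_cont])

lemma H1_meas[measurable]: "(\<lambda>(z,s). H1 \<xi> z s) \<in> borel_measurable (lborel \<Otimes>\<^sub>M lborel)"
  unfolding H1_def kernK_def indicator_def greaterThanLessThan_iff by measurable

definition kk :: "real \<Rightarrow> real \<Rightarrow> real" where
  "kk z s = (if 0 < s \<and> s < z then M / sqrt (z - s) else 0)"

lemma kk_nonneg: "0 \<le> kk z s" using M_pos by (auto simp: kk_def)

lemma kk_meas[measurable]: "(\<lambda>(z,s). kk z s) \<in> borel_measurable (lborel \<Otimes>\<^sub>M lborel)"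
  unfolding kk_def by measurable

lemma H1_zero: "\<not> (0 < s \<and> s < z) \<Longrightarrow> H1 \<xi> z s = 0"
  by (auto simp: H1_def)

lemma quot_bound: "s \<noteq> z \<Longrightarrow> \<bar>(\<xi> z - \<xi> s) / (z - s)\<bar> \<le> M"
  using lip[of z s] by (simp add: abs_divide divide_le_eq)

lemma H1_bound: "\<bar>H1 \<xi> z s\<bar> \<le> kk z s"
proof (cases "0 < s \<and> s < z")
  case True
  let ?q = "(\<xi> z - \<xi> s) / (z - s)" and ?e = "exp (- (((\<xi> z - \<xi> s)^2) / (4 * (z - s))))"
  have q: "\<bar>?q\<bar> \<le> M" using True quot_bound[of s z] by auto
  have e: "\<bar>?e\<bar> \<le> 1" using True by auto
  have "\<bar>H1 \<xi> z s\<bar> = \<bar>?q\<bar> * \<bar>?e\<bar> / sqrt (z - s)"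
    using True by (simp add: H1_def kernK_def abs_mult abs_divide)
  also have "\<dots> \<le> M * 1 / sqrt (z - s)"
    using True q e M_pos by (intro divide_right_mono mult_mono) auto
  finally show ?thesis using True by (simp add: kk_def)
qed (insert M_pos, simp add: H1_zero kk_def)

end

locale kset2 = kset +
  fixes lam a :: real
  assumes lam: "0 \<le> lam" and a_pos: "0 < a" and a_small: "2 * M * sqrt a \<le> 1/4"
    and lam_big: "M / sqrt a * exp (- lam * a) * T \<le> 1/4"
begin

lemma pw_exp:
  assumes "0 < u"
  shows "M / sqrt u * exp (- lam * u) \<le> (if u < a then M / sqrt u else M / sqrt a * exp (- lam * a))"
proof (cases "u < a")
  case True
  have "exp (- lam * u) \<le> 1" using lam assms by auto
  then have "M / sqrt u * exp (- lam * u) \<le> M / sqrt u * 1"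
    using assms M_pos by (intro mult_left_mono) auto
  then show ?thesis using True by simp
next
  case False
  have "M / sqrt u \<le> M / sqrt a" using False a_pos M_pos by (intro divide_left_mono) auto
  moreover have "exp (- lam * u) \<le> exp (- lam * a)" using False lam by (auto intro: mult_left_mono)
  ultimately have "M / sqrt u * exp (- lam * u) \<le> M / sqrt a * exp (- lam * a)"
    using M_pos a_pos by (intro mult_mono) auto
  then show ?thesis using False by simp
qed

lemma KL1: "(\<integral>\<^sup>+ z. indicator {0..T} z * ennreal (kk z s * exp (- lam * (z - s))) \<partial>lborel) \<le> ennreal (1/2)"
proof (cases "0 < s")
  case False
  then have "\<And>z. kk z s = 0" by (auto simp: kk_def)
  then show ?thesis by simp
next
  case s: True
  define c where "c = M / sqrt a * exp (- lam * a)"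
  have c0: "0 \<le> c" using M_pos a_pos by (simp add: c_def)
  have pw: "indicator {0..T} z * ennreal (kk z s * exp (- lam * (z - s)))
      \<le> indicator {s<..<s+a} z * ennreal (M / sqrt (z - s)) + ennreal c * indicator {s<..<s+T} z" for z
  proof (cases "z \<in> {0..T} \<and> s < z")
    case False
    then have eq: "indicator {0..T} z * ennreal (kk z s * exp (- lam * (z - s))) = 0"
      by (auto simp: kk_def indicator_def)
    show ?thesis unfolding eq by (rule zero_le)
  next
    case True
    have u: "0 < z - s" "z - s < T" using True s by auto
    have e: "kk z s * exp (- lam * (z - s)) = M / sqrt (z - s) * exp (- lam * (z - s))"
      using True s by (simp add: kk_def)
    show ?thesis
    proof (cases "z - s < a")
      case True2: True
      have "indicator {0..T} z * ennreal (kk z s * exp (- lam * (z - s))) \<le> indicator {s<..<s+a} z * ennreal (M / sqrt (z - s))"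
        using True True2 pw_exp[OF u(1)] e by (auto simp: indicator_def intro!: ennreal_leI)
      also have "\<dots> \<le> indicator {s<..<s+a} z * ennreal (M / sqrt (z - s)) + ennreal c * indicator {s<..<s+T} z"
        by simp
      finally show ?thesis .
    next
      case False2: False
      have "indicator {0..T} z * ennreal (kk z s * exp (- lam * (z - s))) \<le> ennreal c * indicator {s<..<s+T} z"
        using True False2 pw_exp[OF u(1)] e u by (auto simp: indicator_def c_def intro!: ennreal_leI)
      also have "\<dots> \<le> indicator {s<..<s+a} z * ennreal (M / sqrt (z - s)) + ennreal c * indicator {s<..<s+T} z"
        by simp
      finally show ?thesis .
    qed
  qed
  have "(\<integral>\<^sup>+ z. indicator {0..T} z * ennreal (kk z s * exp (- lam * (z - s))) \<partial>lborel)
      \<le> (\<integral>\<^sup>+ z. indicator {s<..<s+a} z * ennreal (M / sqrt (z - s)) + ennreal c * indicator {s<..<s+T} z \<partial>lborel)"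
    by (intro nn_integral_mono pw)
  also have "\<dots> = (\<integral>\<^sup>+ z. indicator {s<..<s+a} z * ennreal (M / sqrt (z - s)) \<partial>lborel) + (\<integral>\<^sup>+ z. ennreal c * indicator {s<..<s+T} z \<partial>lborel)"
    by (intro nn_integral_add) auto
  also have "\<dots> = ennreal (2 * M * sqrt (s + a - s)) + ennreal (c * (s + T - s))"
    using M_pos a_pos T_pos c0 by (simp add: A1c const_Ioo)
  also have "\<dots> = ennreal (2 * M * sqrt a + c * T)"
    using M_pos a_pos T_pos c0 by (simp add: ennreal_plus)
  also have "\<dots> \<le> ennreal (1/2)"
  proof (intro ennreal_leI)
    have "c * T \<le> 1/4" using lam_big by (simp add: c_def)
    then show "2 * M * sqrt a + c * T \<le> 1/2" using a_small by linarith
  qed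
  finally show ?thesis .
qed

lemma KL2:
  assumes "z \<le> T"
  shows "(\<integral>\<^sup>+ s. ennreal (kk z s * exp (- lam * (z - s))) \<partial>lborel) \<le> ennreal (1/2)"
proof -
  define c where "c = M / sqrt a * exp (- lam * a)"
  have c0: "0 \<le> c" using M_pos a_pos by (simp add: c_def)
  have pw: "ennreal (kk z s * exp (- lam * (z - s)))
      \<le> indicator {z-a<..<z} s * ennreal (M / sqrt (z - s)) + ennreal c * indicator {z-T<..<z} s" for s
  proof (cases "0 < s \<and> s < z")
    case False
    then have "kk z s = 0" by (auto simp: kk_def)
    then show ?thesis by simp
  next
    case True
    have u: "0 < z - s" "z - s < T" using True assms by auto
    have e: "kk z s * exp (- lam * (z - s)) = M / sqrt (z - s) * exp (- lam * (z - s))"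
      using True by (simp add: kk_def)
    show ?thesis
    proof (cases "z - s < a")
      case True2: True
      have "ennreal (kk z s * exp (- lam * (z - s))) \<le> indicator {z-a<..<z} s * ennreal (M / sqrt (z - s))"
        using True True2 pw_exp[OF u(1)] e by (auto simp: indicator_def intro!: ennreal_leI)
      also have "\<dots> \<le> indicator {z-a<..<z} s * ennreal (M / sqrt (z - s)) + ennreal c * indicator {z-T<..<z} s"
        by simp
      finally show ?thesis .
    next
      case False2: False
      have "ennreal (kk z s * exp (- lam * (z - s))) \<le> ennreal c * indicator {z-T<..<z} s"
        using True False2 pw_exp[OF u(1)] e u by (auto simp: indicator_def c_def intro!: ennreal_leI)
      also have "\<dots> \<le> indicator {z-a<..<z} s * ennreal (M / sqrt (z - s)) + ennreal c * indicator {z-T<..<z} s"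
        by simp
      finally show ?thesis .
    qed
  qed
  have "(\<integral>\<^sup>+ s. ennreal (kk z s * exp (- lam * (z - s))) \<partial>lborel)
      \<le> (\<integral>\<^sup>+ s. indicator {z-a<..<z} s * ennreal (M / sqrt (z - s)) + ennreal c * indicator {z-T<..<z} s \<partial>lborel)"
    by (intro nn_integral_mono pw)
  also have "\<dots> = (\<integral>\<^sup>+ s. indicator {z-a<..<z} s * ennreal (M / sqrt (z - s)) \<partial>lborel) + (\<integral>\<^sup>+ s. ennreal c * indicator {z-T<..<z} s \<partial>lborel)"
    by (intro nn_integral_add) auto
  also have "\<dots> = ennreal (2 * M * sqrt (z - (z - a))) + ennreal (c * (z - (z - T)))"
    using M_pos a_pos T_pos c0 by (simp add: A2c const_Ioo)
  also have "\<dots> = ennreal (2 * M * sqrt a + c * T)"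
    using M_pos a_pos T_pos c0 by (simp add: ennreal_plus)
  also have "\<dots> \<le> ennreal (1/2)"
  proof (intro ennreal_leI)
    have "c * T \<le> 1/4" using lam_big by (simp add: c_def)
    then show "2 * M * sqrt a + c * T \<le> 1/2" using a_small by linarith
  qed
  finally show ?thesis .
qed

end

lemma abs_int_le:
  fixes f :: "'a \<Rightarrow> real"
  shows "ennreal \<bar>integral\<^sup>L M f\<bar> \<le> (\<integral>\<^sup>+ x. ennreal \<bar>f x\<bar> \<partial>M)"
proof (cases "integrable M f")
  case True
  then show ?thesis using integral_norm_bound_ennreal[OF True] by simp
next
  case False
  then show ?thesis by (simp add: not_integrable_integral_eq)
qed

context kset
begin

lemma H1_meas_sw[measurable]: "(\<lambda>x. H1 \<xi> (snd x) (fst x)) \<in> borel_measurable (lborel \<Otimes>\<^sub>M lborel)"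
  unfolding H1_def kernK_def indicator_def greaterThanLessThan_iff by measurable

lemma kk_meas_sw[measurable]: "(\<lambda>x. kk (snd x) (fst x)) \<in> borel_measurable (lborel \<Otimes>\<^sub>M lborel)"
  unfolding kk_def by measurable

lemma P_zero: "\<not> (0 < s \<and> s < t) \<Longrightarrow> Hsh \<xi> T n t s = 0"
proof (induction n arbitrary: s)
  case 0
  then show ?case by (simp add: H1_zero)
next
  case (Suc n)
  have "\<And>z. Hsh \<xi> T n t z * H1 \<xi> z s = 0"
  proof -
    fix z
    show "Hsh \<xi> T n t z * H1 \<xi> z s = 0"
    proof (cases "0 < s \<and> s < z")
      case True
      then have "\<not> (0 < z \<and> z < t)" using Suc.prems by auto
      then show ?thesis using Suc.IH by simp
    qed (simp add: H1_zero)
  qed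
  then have eq: "(\<lambda>z. Hsh \<xi> T n t z * H1 \<xi> z s) = (\<lambda>z. 0)" by (rule ext)
  show ?case by (simp only: Hsh.simps eq) simp
qed

lemma P_meas[measurable]: "(\<lambda>s. Hsh \<xi> T n t s) \<in> borel_measurable lborel"
proof (induction n)
  case 0
  show ?case unfolding Hsh.simps H1_def kernK_def indicator_def greaterThanLessThan_iff by measurable
next
  case (Suc n)
  note Suc[measurable]
  have "(\<lambda>x. Hsh \<xi> T n t (snd x)) \<in> borel_measurable (lborel \<Otimes>\<^sub>M lborel)" by measurable
  show ?case unfolding Hsh.simps set_lebesgue_integral_def by measurable
qed

lemma B0: "(\<integral>\<^sup>+ z. ennreal (kk t z * kk z s) \<partial>lborel) \<le> ennreal (6 * M\<^sup>2)"
proof (cases "s < t")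
  case False
  then have "\<And>z. kk t z * kk z s = 0" by (auto simp: kk_def)
  then have eq: "(\<lambda>z. ennreal (kk t z * kk z s)) = (\<lambda>z. 0)" by (intro ext) (metis ennreal_0)
  show ?thesis by (simp only: eq) simp
next
  case True
  define d where "d = t - s"
  have d: "0 < d" using True by (simp add: d_def)
  define c where "c = M\<^sup>2 * sqrt 2 / sqrt d"
  have c0: "0 \<le> c" using d by (simp add: c_def)
  have pw: "ennreal (kk t z * kk z s) \<le> indicator {s<..<t} z * ennreal (c / sqrt (z - s)) + indicator {s<..<t} z * ennreal (c / sqrt (t - z))" for z
  proof (cases "0 < s \<and> s < z \<and> z < t")
    case False
    then have "kk t z * kk z s = 0" by (auto simp: kk_def)
    then show ?thesis by (metis ennreal_0 zero_le)
  next
    case True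
    have pq: "0 < t - z" "0 < z - s" "(t - z) + (z - s) = d" using True by (auto simp: d_def)
    have "kk t z * kk z s = M / sqrt (t - z) * (M / sqrt (z - s))"
      using True by (simp add: kk_def)
    also have "\<dots> = M\<^sup>2 * (1 / (sqrt (t - z) * sqrt (z - s)))" by (simp add: power2_eq_square)
    also have "\<dots> \<le> M\<^sup>2 * (sqrt 2 / sqrt d * (1 / sqrt (z - s) + 1 / sqrt (t - z)))"
      by (intro mult_left_mono key_ineq[OF pq]) auto
    also have "\<dots> = c / sqrt (z - s) + c / sqrt (t - z)" by (simp add: c_def distrib_left)
    finally have le: "kk t z * kk z s \<le> c / sqrt (z - s) + c / sqrt (t - z)" .
    have i1: "indicator {s<..<t} z = (1::ennreal)" using True by simp
    have n1a: "0 \<le> c / sqrt (z - s)" using c0 True by (intro divide_nonneg_nonneg) auto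
    have n1b: "0 \<le> c / sqrt (t - z)" using c0 True by (intro divide_nonneg_nonneg) auto
    note n1 = n1a n1b
    have "ennreal (kk t z * kk z s) \<le> ennreal (c / sqrt (z - s) + c / sqrt (t - z))"
      by (rule ennreal_leI[OF le])
    also have "\<dots> = ennreal (c / sqrt (z - s)) + ennreal (c / sqrt (t - z))"
      using n1 by (rule ennreal_plus)
    finally show ?thesis unfolding i1 by simp
  qed
  have "(\<integral>\<^sup>+ z. ennreal (kk t z * kk z s) \<partial>lborel) \<le> (\<integral>\<^sup>+ z. indicator {s<..<t} z * ennreal (c / sqrt (z - s)) + indicator {s<..<t} z * ennreal (c / sqrt (t - z)) \<partial>lborel)"
    by (intro nn_integral_mono pw)
  also have "\<dots> = (\<integral>\<^sup>+ z. indicator {s<..<t} z * ennreal (c / sqrt (z - s)) \<partial>lborel) + (\<integral>\<^sup>+ z. indicator {s<..<t} z * ennreal (c / sqrt (t - z)) \<partial>lborel)"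
    by (intro nn_integral_add) auto
  also have "\<dots> = ennreal (2 * c * sqrt d) + ennreal (2 * c * sqrt d)"
    using c0 True by (simp add: A1c A2c d_def)
  also have "\<dots> = ennreal (4 * sqrt 2 * M\<^sup>2)"
    using c0 d by (simp add: ennreal_plus[symmetric] c_def)
  also have "\<dots> \<le> ennreal (6 * M\<^sup>2)"
  proof (intro ennreal_leI mult_right_mono)
    have "sqrt 2 \<le> 3/2" by (rule real_le_lsqrt) (auto simp: power2_eq_square)
    then show "4 * sqrt 2 \<le> 6" by simp
  qed simp
  finally show ?thesis .
qed

end


lemma exp_lip:
  fixes x y :: real assumes "0 \<le> x" "0 \<le> y"
  shows "\<bar>exp (- x) - exp (- y)\<bar> \<le> \<bar>x - y\<bar>"
proof -
  have main: "exp (- a) - exp (- b) \<le> b - a" if "0 \<le> a" "a \<le> b" for a b :: real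
  proof -
    have "exp (- a) - exp (- b) = exp (- a) * (1 - exp (- (b - a)))"
      by (simp add: algebra_simps exp_add[symmetric])
    also have "\<dots> \<le> 1 * (1 - exp (- (b - a)))"
      using that by (intro mult_right_mono) auto
    also have "\<dots> \<le> b - a"
    proof -
      have "1 + (- (b - a)) \<le> exp (- (b - a))" by (rule exp_ge_add_one_self)
      then show ?thesis by (simp only: mult_1)
    qed
    finally show ?thesis .
  qed
  show ?thesis
  proof (cases "x \<le> y")
    case True
    then have "0 \<le> exp (- x) - exp (- y)" by simp
    then show ?thesis using main[OF assms(1) True] True by simp
  next
    case False
    then have "0 \<le> exp (- y) - exp (- x)" by simp
    then show ?thesis using main[OF assms(2)] False by simp
  qed
qed

lemma EE_lemma:
  fixes M h u u' d d' :: real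
  assumes u: "0 < u'" "u' < u" and h: "h = u - u'"
    and d: "\<bar>d\<bar> \<le> M * u" and d': "\<bar>d'\<bar> \<le> M * u'" and dd: "\<bar>d - d'\<bar> \<le> M * h" and M: "0 \<le> M"
  shows "\<bar>d\<^sup>2 / (4 * u) - d'\<^sup>2 / (4 * u')\<bar> \<le> M^2 * h"
proof -
  have u0: "0 < u" using u by simp
  have hpos: "0 < h" using u h by simp
  have e1: "d\<^sup>2 / (4 * u) - d'\<^sup>2 / (4 * u) = (d - d') * (d + d') / (4 * u)"
    by (simp add: power2_eq_square diff_divide_distrib[symmetric] algebra_simps)
  have e2: "d'\<^sup>2 / (4 * u) - d'\<^sup>2 / (4 * u') = - (d'\<^sup>2 * (h / (4 * u * u')))"
  proof -
    have "d'\<^sup>2 / (4 * u) = d'\<^sup>2 * (u' / (4 * u * u'))" using u by simp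
    moreover have "d'\<^sup>2 / (4 * u') = d'\<^sup>2 * (u / (4 * u * u'))" using u0 by simp
    ultimately have "d'\<^sup>2 / (4 * u) - d'\<^sup>2 / (4 * u') = d'\<^sup>2 * (u' / (4 * u * u') - u / (4 * u * u'))"
      by (simp add: right_diff_distrib)
    also have "u' / (4 * u * u') - u / (4 * u * u') = - (h / (4 * u * u'))"
      using u u0 by (simp add: h field_simps)
    finally show ?thesis by (simp only: mult_minus_right)
  qed
  have b1: "\<bar>(d - d') * (d + d') / (4 * u)\<bar> \<le> M^2 * h / 2"
  proof -
    have "M * u' \<le> M * u" using u M by (intro mult_left_mono) auto
    then have "\<bar>d + d'\<bar> \<le> 2 * M * u" using d d' by linarith
    then have "\<bar>(d - d') * (d + d')\<bar> \<le> M * h * (2 * M * u)"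
      unfolding abs_mult using dd by (intro mult_mono) auto
    then have "\<bar>(d - d') * (d + d')\<bar> / (4 * u) \<le> M * h * (2 * M * u) / (4 * u)"
      using u0 by (intro divide_right_mono) auto
    also have "M * h * (2 * M * u) / (4 * u) = M^2 * h / 2"
      using u0 by (simp add: power2_eq_square)
    finally show ?thesis using u0 by (simp add: abs_divide)
  qed
  have b2: "\<bar>d'\<^sup>2 * (h / (4 * u * u'))\<bar> \<le> M^2 * h / 4"
  proof -
    have "\<bar>d'\<bar>^2 \<le> (M * u')^2" using d' by (intro power_mono) auto
    then have sq: "d'\<^sup>2 \<le> M^2 * u'^2" by (simp add: power_mult_distrib)
    have pos: "0 \<le> h / (4 * u * u')" using hpos u u0 by simp
    have "\<bar>d'\<^sup>2 * (h / (4 * u * u'))\<bar> = d'\<^sup>2 * (h / (4 * u * u'))" using pos by (intro abs_of_nonneg mult_nonneg_nonneg) auto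
    also have "\<dots> \<le> M^2 * u'^2 * (h / (4 * u * u'))" using sq pos by (rule mult_right_mono)
    also have "\<dots> = M^2 * h / 4 * (u' / u)" using u by (simp add: power2_eq_square)
    also have "\<dots> \<le> M^2 * h / 4 * 1" using u hpos by (intro mult_left_mono) auto
    finally show ?thesis by simp
  qed
  have "d\<^sup>2 / (4 * u) - d'\<^sup>2 / (4 * u') = (d - d') * (d + d') / (4 * u) - d'\<^sup>2 * (h / (4 * u * u'))"
    using e1 e2 by linarith
  then show ?thesis
    using abs_triangle_ineq4[of "(d - d') * (d + d') / (4 * u)" "d'\<^sup>2 * (h / (4 * u * u'))"] b1 b2
    by linarith
qed
lemma kdiff_real:
  fixes M h u u' d d' :: real
  assumes u: "0 < u'" "u' < u" and h: "h = u - u'"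
    and d: "\<bar>d\<bar> \<le> M * u" and d': "\<bar>d'\<bar> \<le> M * u'" and dd: "\<bar>d - d'\<bar> \<le> M * h" and M: "0 \<le> M"
  shows "\<bar>d / u * exp (- (d\<^sup>2 / (4 * u))) / sqrt u - d' / u' * exp (- (d'\<^sup>2 / (4 * u'))) / sqrt u'\<bar>
     \<le> 2 * M * h * (1 / (u * sqrt u)) + M^3 * h / sqrt u + M * (1 / sqrt u' - 1 / sqrt u)"
proof -
  define q where "q = d / u"
  define q' where "q' = d' / u'"
  define E where "E = exp (- (d\<^sup>2 / (4 * u)))"
  define E' where "E' = exp (- (d'\<^sup>2 / (4 * u')))"
  define c where "c = 1 / sqrt u"
  define c' where "c' = 1 / sqrt u'"
  have u0: "0 < u" using u by simp
  have hpos: "0 < h" using u h by simp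
  have q': "\<bar>q'\<bar> \<le> M" using d' u by (simp add: q'_def abs_divide divide_le_eq)
  have qq: "\<bar>q - q'\<bar> \<le> 2 * M * h / u"
  proof -
    have "q - q' = (d - d') / u - d' * h / (u * u')"
      using u u0 by (simp add: q_def q'_def h field_simps)
    also have "\<bar>\<dots>\<bar> \<le> \<bar>(d - d') / u\<bar> + \<bar>d' * h / (u * u')\<bar>" by (rule abs_triangle_ineq4)
    also have "\<bar>(d - d') / u\<bar> \<le> M * h / u" using dd u0 by (simp add: abs_divide divide_right_mono)
    also have "\<bar>d' * h / (u * u')\<bar> \<le> M * u' * h / (u * u')"
    proof -
      have "\<bar>d'\<bar> * h \<le> M * u' * h" using d' hpos by (intro mult_right_mono) auto
      then have "\<bar>d'\<bar> * h / (u * u') \<le> M * u' * h / (u * u')" using u u0 by (intro divide_right_mono) auto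
      then show ?thesis using hpos u u0 by (simp add: abs_divide abs_mult)
    qed
    also have "M * u' * h / (u * u') = M * h / u" using u by simp
    finally show ?thesis by simp
  qed
  have E: "0 \<le> E" "E \<le> 1" "0 \<le> E'" "E' \<le> 1" using u u0 by (auto simp: E_def E'_def)
  have EE: "\<bar>E - E'\<bar> \<le> M^2 * h"
  proof -
    have "\<bar>E - E'\<bar> \<le> \<bar>d\<^sup>2 / (4 * u) - d'\<^sup>2 / (4 * u')\<bar>"
      unfolding E_def E'_def using u u0 by (intro exp_lip) auto
    also have "\<dots> \<le> M^2 * h" by (rule EE_lemma[OF assms])
    finally show ?thesis .
  qed
  have c: "0 < c" "c \<le> c'" using u u0 by (auto simp: c_def c'_def intro!: divide_left_mono)
  have "d / u * exp (- (d\<^sup>2 / (4 * u))) / sqrt u - d' / u' * exp (- (d'\<^sup>2 / (4 * u'))) / sqrt u'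
      = q * E * c - q' * E' * c'"
    by (simp add: q_def q'_def E_def E'_def c_def c'_def)
  also have "\<dots> = (q - q') * E * c + q' * (E - E') * c + q' * E' * (c - c')"
    by (simp add: algebra_simps)
  finally have eqd: "d / u * exp (- (d\<^sup>2 / (4 * u))) / sqrt u - d' / u' * exp (- (d'\<^sup>2 / (4 * u'))) / sqrt u'
      = (q - q') * E * c + q' * (E - E') * c + q' * E' * (c - c')" .
  have tri: "\<bar>(q - q') * E * c + q' * (E - E') * c + q' * E' * (c - c')\<bar> \<le> \<bar>(q - q') * E * c\<bar> + \<bar>q' * (E - E') * c\<bar> + \<bar>q' * E' * (c - c')\<bar>"
    by (meson abs_triangle_ineq add_mono order_trans order_refl)
  have b1: "\<bar>(q - q') * E * c\<bar> \<le> 2 * M * h / u * 1 * c"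
    unfolding abs_mult using qq E c by (intro mult_mono) auto
  have b2: "\<bar>q' * (E - E') * c\<bar> \<le> M * (M^2 * h) * c"
    unfolding abs_mult using q' EE E c M by (intro mult_mono) auto
  have b3: "\<bar>q' * E' * (c - c')\<bar> \<le> M * 1 * (c' - c)"
    unfolding abs_mult using q' E c M by (intro mult_mono) auto
  have "\<bar>d / u * exp (- (d\<^sup>2 / (4 * u))) / sqrt u - d' / u' * exp (- (d'\<^sup>2 / (4 * u'))) / sqrt u'\<bar>
     \<le> 2 * M * h / u * 1 * c + M * (M^2 * h) * c + M * 1 * (c' - c)"
    unfolding eqd using tri b1 b2 b3 by linarith
  also have "2 * M * h / u * 1 * c + M * (M^2 * h) * c + M * 1 * (c' - c) = 2 * M * h * (1 / (u * sqrt u)) + M^3 * h / sqrt u + M * (1 / sqrt u' - 1 / sqrt u)"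
    by (simp add: c_def c'_def power3_eq_cube power2_eq_square)
  finally show ?thesis .
qed



lemma cmult_bound:
  assumes "g \<in> borel_measurable lborel" "integral\<^sup>N lborel g \<le> ennreal b" "0 \<le> c" "0 \<le> b"
  shows "(\<integral>\<^sup>+ s. ennreal c * g s \<partial>lborel) \<le> ennreal (c * b)"
proof -
  have "(\<integral>\<^sup>+ s. ennreal c * g s \<partial>lborel) = ennreal c * integral\<^sup>N lborel g"
    using assms(1) by (rule nn_integral_cmult)
  also have "\<dots> \<le> ennreal c * ennreal b" using assms(2) by (rule mult_left_mono) simp
  also have "\<dots> = ennreal (c * b)" using assms(3,4) by (simp add: ennreal_mult)
  finally show ?thesis .
qed

context kset
begin

lemma D0:
  assumes t': "0 \<le> t'" "t' < t" and tT: "t \<le> T"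
  shows "(\<integral>\<^sup>+ s. ennreal \<bar>H1 \<xi> t s - H1 \<xi> t' s\<bar> \<partial>lborel) \<le> ennreal ((8 * M + 2 * M^3 * T) * sqrt (t - t'))"
proof -
  define h where "h = t - t'"
  have h: "0 < h" using t' by (simp add: h_def)
  have M0: "0 \<le> M" using M_pos by simp
  define R where "R s = ennreal (2*M*h) * (indicator {0<..<t'} s * ennreal (1 / ((t - s) * sqrt (t - s))))
     + ennreal (M^3*h) * (indicator {0<..<t} s * ennreal (1 / sqrt (t - s)))
     + ennreal M * (indicator {0<..<t'} s * ennreal (1 / sqrt (t' - s) - 1 / sqrt (t - s)))
     + ennreal M * (indicator {t'<..<t} s * ennreal (1 / sqrt (t - s)))" for s
  have pw: "ennreal \<bar>H1 \<xi> t s - H1 \<xi> t' s\<bar> \<le> R s" if ne: "s \<noteq> t'" for s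
  proof -
    consider "\<not> (0 < s \<and> s < t)" | "0 < s" "s < t'" | "t' < s" "s < t" using ne by fastforce
    then show ?thesis
    proof cases
      case 1
      then have "H1 \<xi> t s = 0" "H1 \<xi> t' s = 0" using t' by (auto simp: H1_zero)
      then show ?thesis by simp
    next
      case 2
      have kd: "\<bar>(\<xi> t - \<xi> s) / (t - s) * exp (- ((\<xi> t - \<xi> s)\<^sup>2 / (4 * (t - s)))) / sqrt (t - s)
           - (\<xi> t' - \<xi> s) / (t' - s) * exp (- ((\<xi> t' - \<xi> s)\<^sup>2 / (4 * (t' - s)))) / sqrt (t' - s)\<bar>
        \<le> 2 * M * h * (1 / ((t - s) * sqrt (t - s))) + M^3 * h / sqrt (t - s) + M * (1 / sqrt (t' - s) - 1 / sqrt (t - s))"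
      proof (rule kdiff_real)
        show "\<bar>\<xi> t - \<xi> s\<bar> \<le> M * (t - s)" using lip[of t s] 2 t' by simp
        show "\<bar>\<xi> t' - \<xi> s\<bar> \<le> M * (t' - s)" using lip[of t' s] 2 by simp
        show "\<bar>\<xi> t - \<xi> s - (\<xi> t' - \<xi> s)\<bar> \<le> M * h" using lip[of t t'] t' by (simp add: h_def)
      qed (use 2 t' M0 in \<open>auto simp: h_def\<close>)
      have eqH: "H1 \<xi> t s - H1 \<xi> t' s = (\<xi> t - \<xi> s) / (t - s) * exp (- ((\<xi> t - \<xi> s)\<^sup>2 / (4 * (t - s)))) / sqrt (t - s)
           - (\<xi> t' - \<xi> s) / (t' - s) * exp (- ((\<xi> t' - \<xi> s)\<^sup>2 / (4 * (t' - s)))) / sqrt (t' - s)"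
        using 2 t' by (simp add: H1_def kernK_def)
      define A where "A = 1 / ((t - s) * sqrt (t - s))"
      define B where "B = 1 / sqrt (t - s)"
      define C where "C = 1 / sqrt (t' - s) - 1 / sqrt (t - s)"
      have nC: "0 \<le> C" using 2 t' unfolding C_def by (intro diff_ge_0_iff_ge[THEN iffD2] divide_left_mono) auto
      have nA: "0 \<le> A" using 2 t' unfolding A_def by auto
      have nB: "0 \<le> B" using 2 t' unfolding B_def by auto
      have x1: "0 \<le> 2*M*h*A" using nA h M0 by simp
      have x2: "0 \<le> M^3*h*B" using nB h M0 by simp
      have x3: "0 \<le> M*C" using nC M0 by simp
      have Rs: "R s = ennreal (2*M*h) * ennreal A + ennreal (M^3*h) * ennreal B + ennreal M * ennreal C"
        using 2 t' by (simp add: R_def A_def B_def C_def)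
      also have "\<dots> = ennreal (2*M*h*A) + ennreal (M^3*h*B) + ennreal (M*C)"
        using nA nB nC h M0 by (simp add: ennreal_mult)
      also have "\<dots> = ennreal (2*M*h*A + M^3*h*B + M*C)"
        using x1 x2 x3 by (simp add: ennreal_plus)
      finally have Rs': "R s = ennreal (2*M*h*A + M^3*h*B + M*C)" .
      have "\<bar>H1 \<xi> t s - H1 \<xi> t' s\<bar> \<le> 2*M*h*A + M^3*h*B + M*C"
        using kd eqH by (simp add: A_def B_def C_def)
      then show ?thesis unfolding Rs' by (rule ennreal_leI)
    next
      case 3
      have "\<bar>H1 \<xi> t s - H1 \<xi> t' s\<bar> \<le> M * (1 / sqrt (t - s))"
        using H1_bound[of t s] 3 t' by (simp add: H1_zero kk_def)
      then have "ennreal \<bar>H1 \<xi> t s - H1 \<xi> t' s\<bar> \<le> ennreal M * (indicator {t'<..<t} s * ennreal (1 / sqrt (t - s)))"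
        using 3 M0 by (simp add: indicator_def ennreal_mult[symmetric] ennreal_leI)
      also have "\<dots> \<le> R s" unfolding R_def by (simp add: add_increasing)
      finally show ?thesis .
    qed
  qed
  define g1 where "g1 s = indicator {0<..<t'} s * ennreal (1 / ((t - s) * sqrt (t - s)))" for s
  define g2 where "g2 s = indicator {0<..<t} s * ennreal (1 / sqrt (t - s))" for s
  define g3 where "g3 s = indicator {0<..<t'} s * ennreal (1 / sqrt (t' - s) - 1 / sqrt (t - s))" for s
  define g4 where "g4 s = indicator {t'<..<t} s * ennreal (1 / sqrt (t - s))" for s
  have m1[measurable]: "g1 \<in> borel_measurable lborel" unfolding g1_def by measurable
  have m2[measurable]: "g2 \<in> borel_measurable lborel" unfolding g2_def by measurable
  have m3[measurable]: "g3 \<in> borel_measurable lborel" unfolding g3_def by measurable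
  have m4[measurable]: "g4 \<in> borel_measurable lborel" unfolding g4_def by measurable
  have Req: "R = (\<lambda>s. ennreal (2*M*h) * g1 s + ennreal (M^3*h) * g2 s + ennreal M * g3 s + ennreal M * g4 s)"
    by (simp add: R_def g1_def g2_def g3_def g4_def fun_eq_iff)
  have I1: "(\<integral>\<^sup>+ s. ennreal (2*M*h) * g1 s \<partial>lborel) \<le> ennreal (2*M*h * (2 / sqrt h))"
    by (rule cmult_bound) (use A3[OF t'] h M0 in \<open>auto simp: g1_def h_def\<close>)
  have I2: "(\<integral>\<^sup>+ s. ennreal (M^3*h) * g2 s \<partial>lborel) \<le> ennreal (M^3*h * (2 * sqrt t))"
    by (rule cmult_bound) (use A2[of 0 t] t' h M0 in \<open>auto simp: g2_def\<close>)
  have I3: "(\<integral>\<^sup>+ s. ennreal M * g3 s \<partial>lborel) \<le> ennreal (M * (2 * sqrt h))"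
    by (rule cmult_bound) (use A4[OF t'] h M0 in \<open>auto simp: g3_def h_def\<close>)
  have I4: "(\<integral>\<^sup>+ s. ennreal M * g4 s \<partial>lborel) \<le> ennreal (M * (2 * sqrt h))"
    by (rule cmult_bound) (use A2[of t' t] t' h M0 in \<open>auto simp: g4_def h_def\<close>)
  have "(\<integral>\<^sup>+ s. ennreal \<bar>H1 \<xi> t s - H1 \<xi> t' s\<bar> \<partial>lborel) \<le> (\<integral>\<^sup>+ s. R s \<partial>lborel)"
  proof (rule nn_integral_mono_AE)
    show "AE s in lborel. ennreal \<bar>H1 \<xi> t s - H1 \<xi> t' s\<bar> \<le> R s"
      using AE_lborel_singleton[of t'] by eventually_elim (rule pw)
  qed
  also have "\<dots> = (\<integral>\<^sup>+ s. ennreal (2*M*h) * g1 s \<partial>lborel) + (\<integral>\<^sup>+ s. ennreal (M^3*h) * g2 s \<partial>lborel)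
      + (\<integral>\<^sup>+ s. ennreal M * g3 s \<partial>lborel) + (\<integral>\<^sup>+ s. ennreal M * g4 s \<partial>lborel)"
  proof -
    let ?f1 = "\<lambda>s. ennreal (2*M*h) * g1 s" and ?f2 = "\<lambda>s. ennreal (M^3*h) * g2 s"
      and ?f3 = "\<lambda>s. ennreal M * g3 s" and ?f4 = "\<lambda>s. ennreal M * g4 s"
    have f1: "?f1 \<in> borel_measurable lborel" by measurable
    have f2: "?f2 \<in> borel_measurable lborel" by measurable
    have f3: "?f3 \<in> borel_measurable lborel" by measurable
    have f4: "?f4 \<in> borel_measurable lborel" by measurable
    have f12: "(\<lambda>s. ?f1 s + ?f2 s) \<in> borel_measurable lborel" by measurable
    have f123: "(\<lambda>s. ?f1 s + ?f2 s + ?f3 s) \<in> borel_measurable lborel" by measurable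
    have "(\<integral>\<^sup>+ s. R s \<partial>lborel) = (\<integral>\<^sup>+ s. (?f1 s + ?f2 s + ?f3 s) + ?f4 s \<partial>lborel)"
      unfolding Req by simp
    also have "\<dots> = (\<integral>\<^sup>+ s. ?f1 s + ?f2 s + ?f3 s \<partial>lborel) + (\<integral>\<^sup>+ s. ?f4 s \<partial>lborel)"
      by (rule nn_integral_add[OF f123 f4])
    also have "(\<integral>\<^sup>+ s. ?f1 s + ?f2 s + ?f3 s \<partial>lborel) = (\<integral>\<^sup>+ s. ?f1 s + ?f2 s \<partial>lborel) + (\<integral>\<^sup>+ s. ?f3 s \<partial>lborel)"
      by (rule nn_integral_add[OF f12 f3])
    also have "(\<integral>\<^sup>+ s. ?f1 s + ?f2 s \<partial>lborel) = (\<integral>\<^sup>+ s. ?f1 s \<partial>lborel) + (\<integral>\<^sup>+ s. ?f2 s \<partial>lborel)"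
      by (rule nn_integral_add[OF f1 f2])
    finally show ?thesis .
  qed
  also have "\<dots> \<le> ennreal (2*M*h * (2 / sqrt h)) + ennreal (M^3*h * (2 * sqrt t)) + ennreal (M * (2 * sqrt h)) + ennreal (M * (2 * sqrt h))"
    by (intro add_mono I1 I2 I3 I4)
  also have "\<dots> = ennreal (2*M*h * (2 / sqrt h) + M^3*h * (2 * sqrt t) + M * (2 * sqrt h) + M * (2 * sqrt h))"
  proof -
    have n: "0 \<le> 2*M*h * (2 / sqrt h)" "0 \<le> M^3*h * (2 * sqrt t)" "0 \<le> M * (2 * sqrt h)"
      using h M0 t' by auto
    show ?thesis
      by (simp only: ennreal_plus[symmetric] n add_nonneg_nonneg)
  qed
  also have "\<dots> \<le> ennreal ((8 * M + 2 * M^3 * T) * sqrt (t - t'))"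
  proof (intro ennreal_leI)
    have s1: "2*M*h * (2 / sqrt h) = 4 * M * sqrt h"
      using h by (simp add: field_simps)
    have "h * sqrt t \<le> T * sqrt h"
    proof -
      have "sqrt h \<le> sqrt T" using h_def t' tT by simp
      have "h * sqrt t = sqrt h * (sqrt h * sqrt t)" using h by simp
      also have "\<dots> \<le> sqrt h * (sqrt T * sqrt T)"
        using \<open>sqrt h \<le> sqrt T\<close> tT t' h by (intro mult_left_mono mult_mono) auto
      also have "\<dots> = T * sqrt h" using T_pos by simp
      finally show ?thesis .
    qed
    then have "(2 * M^3) * (h * sqrt t) \<le> (2 * M^3) * (T * sqrt h)"
      using M0 by (intro mult_left_mono) auto
    then have "M^3*h * (2 * sqrt t) \<le> 2 * M^3 * T * sqrt h"
      by (simp add: mult_ac)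
    then show "2*M*h * (2 / sqrt h) + M^3*h * (2 * sqrt t) + M * (2 * sqrt h) + M * (2 * sqrt h) \<le> (8 * M + 2 * M^3 * T) * sqrt (t - t')"
      using s1 by (simp add: h_def[symmetric] algebra_simps)
  qed
  finally show ?thesis .
qed

end

declare Hsh.simps(2)[simp del]



context kset2
begin

lemma kk_int: "(\<integral>\<^sup>+ z. indicator {0..T} z * ennreal (kk z s) \<partial>lborel) \<le> ennreal (exp (lam * T) / 2)"
proof -
  have pw: "indicator {0..T} z * ennreal (kk z s) \<le> ennreal (exp (lam * T)) * (indicator {0..T} z * ennreal (kk z s * exp (- lam * (z - s))))" for z
  proof (cases "z \<in> {0..T} \<and> 0 < s \<and> s < z")
    case True
    have "1 \<le> exp (lam * T) * exp (- lam * (z - s))"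
    proof -
      have "lam * z \<le> lam * T" using True lam by (intro mult_left_mono) auto
      moreover have "0 \<le> lam * s" using True lam by simp
      ultimately have "0 \<le> lam * T + (- lam * (z - s))" by (simp add: algebra_simps)
      then show ?thesis by (simp add: exp_add[symmetric])
    qed
    then have "kk z s * 1 \<le> kk z s * (exp (lam * T) * exp (- lam * (z - s)))"
      using kk_nonneg[of z s] by (intro mult_left_mono) auto
    then have "kk z s \<le> exp (lam * T) * (kk z s * exp (- lam * (z - s)))"
      by (simp add: mult_ac)
    then show ?thesis using True kk_nonneg[of z s]
      by (simp add: ennreal_mult[symmetric] ennreal_leI)
  next
    case False
    then have "indicator {0..T} z * ennreal (kk z s) = 0" by (auto simp: kk_def indicator_def)
    then show ?thesis by (metis zero_le)
  qed
  have "(\<integral>\<^sup>+ z. indicator {0..T} z * ennreal (kk z s) \<partial>lborel) \<le> (\<integral>\<^sup>+ z. ennreal (exp (lam * T)) * (indicator {0..T} z * ennreal (kk z s * exp (- lam * (z - s)))) \<partial>lborel)"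
    by (intro nn_integral_mono pw)
  also have "\<dots> = ennreal (exp (lam * T)) * (\<integral>\<^sup>+ z. indicator {0..T} z * ennreal (kk z s * exp (- lam * (z - s))) \<partial>lborel)"
    by (intro nn_integral_cmult) auto
  also have "\<dots> \<le> ennreal (exp (lam * T)) * ennreal (1/2)"
    by (intro mult_left_mono KL1) auto
  also have "ennreal (exp (lam * T)) * ennreal (1/2) = ennreal (exp (lam * T) / 2)"
    by (subst ennreal_mult[symmetric]) auto
  finally show ?thesis .
qed

lemma LINT_abs_le:
  "ennreal \<bar>LINT z:{0..T}|lborel. g z * H1 \<xi> z s\<bar> \<le> (\<integral>\<^sup>+ z. indicator {0..T} z * ennreal (\<bar>g z\<bar> * kk z s) \<partial>lborel)"
proof -
  have "ennreal \<bar>LINT z:{0..T}|lborel. g z * H1 \<xi> z s\<bar> \<le> (\<integral>\<^sup>+ z. ennreal \<bar>indicator {0..T} z *\<^sub>R (g z * H1 \<xi> z s)\<bar> \<partial>lborel)"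
    unfolding set_lebesgue_integral_def by (rule abs_int_le)
  also have "\<dots> \<le> (\<integral>\<^sup>+ z. indicator {0..T} z * ennreal (\<bar>g z\<bar> * kk z s) \<partial>lborel)"
  proof (intro nn_integral_mono)
    fix z
    have "\<bar>g z * H1 \<xi> z s\<bar> \<le> \<bar>g z\<bar> * kk z s"
      by (simp add: abs_mult H1_bound mult_left_mono)
    then show "ennreal \<bar>indicator {0..T} z *\<^sub>R (g z * H1 \<xi> z s)\<bar> \<le> indicator {0..T} z * ennreal (\<bar>g z\<bar> * kk z s)"
      by (auto simp: indicator_def intro: ennreal_leI)
  qed
  finally show ?thesis .
qed

lemma int_step:
  assumes "\<And>z. \<bar>g z\<bar> \<le> c * exp (- lam * z)"
  shows "\<bar>LINT z:{0..T}|lborel. g z * H1 \<xi> z s\<bar> \<le> c * exp (- lam * s) / 2"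
proof -
  have c0: "0 \<le> c" using assms[of 0] by (smt (verit) exp_gt_zero mult_nonneg_nonneg zero_le_mult_iff)
  have "ennreal \<bar>LINT z:{0..T}|lborel. g z * H1 \<xi> z s\<bar> \<le> (\<integral>\<^sup>+ z. indicator {0..T} z * ennreal (\<bar>g z\<bar> * kk z s) \<partial>lborel)"
    by (rule LINT_abs_le)
  also have "\<dots> \<le> (\<integral>\<^sup>+ z. ennreal (c * exp (- lam * s)) * (indicator {0..T} z * ennreal (kk z s * exp (- lam * (z - s)))) \<partial>lborel)"
  proof (intro nn_integral_mono)
    fix z
    have "\<bar>g z\<bar> * kk z s \<le> c * exp (- lam * z) * kk z s"
      by (intro mult_right_mono assms kk_nonneg)
    also have "\<dots> = c * exp (- lam * s) * (kk z s * exp (- lam * (z - s)))"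
      by (simp add: exp_add[symmetric] algebra_simps)
    finally show "indicator {0..T} z * ennreal (\<bar>g z\<bar> * kk z s) \<le> ennreal (c * exp (- lam * s)) * (indicator {0..T} z * ennreal (kk z s * exp (- lam * (z - s))))"
      using c0 kk_nonneg[of z s] by (auto simp: indicator_def ennreal_mult[symmetric] intro: ennreal_leI)
  qed
  also have "\<dots> = ennreal (c * exp (- lam * s)) * (\<integral>\<^sup>+ z. indicator {0..T} z * ennreal (kk z s * exp (- lam * (z - s))) \<partial>lborel)"
    by (intro nn_integral_cmult) auto
  also have "\<dots> \<le> ennreal (c * exp (- lam * s)) * ennreal (1/2)"
    by (intro mult_left_mono KL1) auto
  also have "\<dots> = ennreal (c * exp (- lam * s) / 2)"
    using c0 by (subst ennreal_mult[symmetric]) auto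
  finally show ?thesis using c0 by (simp add: ennreal_le_iff)
qed

definition "BB = 6 * M\<^sup>2 * exp (lam * T)"

lemma BB_nonneg: "0 \<le> BB" by (simp add: BB_def)

lemma P1_bound:
  assumes "t \<le> T"
  shows "\<bar>Hsh \<xi> T (Suc 0) t s\<bar> \<le> BB * exp (- lam * s)"
proof (cases "0 < s \<and> s < t")
  case False
  then show ?thesis using P_zero[OF False, of "Suc 0"] BB_nonneg by simp
next
  case True
  have "ennreal \<bar>Hsh \<xi> T (Suc 0) t s\<bar> \<le> (\<integral>\<^sup>+ z. indicator {0..T} z * ennreal (\<bar>H1 \<xi> t z\<bar> * kk z s) \<partial>lborel)"
    using LINT_abs_le[of "\<lambda>z. H1 \<xi> t z" s] by (simp add: Hsh.simps(2))
  also have "\<dots> \<le> (\<integral>\<^sup>+ z. ennreal (kk t z * kk z s) \<partial>lborel)"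
    by (intro nn_integral_mono)
       (auto simp: indicator_def intro!: ennreal_leI mult_right_mono H1_bound kk_nonneg)
  also have "\<dots> \<le> ennreal (6 * M\<^sup>2)" by (rule B0)
  finally have "\<bar>Hsh \<xi> T (Suc 0) t s\<bar> \<le> 6 * M\<^sup>2" by (simp add: ennreal_le_iff)
  also have "6 * M\<^sup>2 \<le> BB * exp (- lam * s)"
  proof -
    have "1 \<le> exp (lam * T) * exp (- lam * s)"
    proof -
      have "lam * s \<le> lam * T" using True assms lam by (intro mult_left_mono) auto
      then have "0 \<le> lam * T + (- lam * s)" by (simp add: algebra_simps)
      then show ?thesis by (simp add: exp_add[symmetric])
    qed
    then have "6 * M\<^sup>2 * 1 \<le> 6 * M\<^sup>2 * (exp (lam * T) * exp (- lam * s))"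
      by (intro mult_left_mono) auto
    then show ?thesis by (simp add: BB_def mult.assoc)
  qed
  finally show ?thesis .
qed

lemma P_bound:
  assumes "t \<le> T"
  shows "\<bar>Hsh \<xi> T (Suc n) t s\<bar> \<le> BB * (1/2)^n * exp (- lam * s)"
proof (induction n arbitrary: s)
  case 0
  then show ?case using P1_bound[OF assms] by simp
next
  case (Suc n)
  have "\<bar>Hsh \<xi> T (Suc (Suc n)) t s\<bar> \<le> BB * (1/2)^n * exp (- lam * s) / 2"
    unfolding Hsh.simps(2)[of _ _ "Suc n"] by (rule int_step[OF Suc.IH])
  then show ?case by simp
qed

lemma P_bound': "t \<le> T \<Longrightarrow> \<bar>Hsh \<xi> T (Suc n) t s\<bar> \<le> BB * (1/2)^n"
proof (cases "0 < s")
  case True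
  assume "t \<le> T"
  have "exp (- lam * s) \<le> 1" using True lam by (simp add: mult_nonneg_nonneg)
  then have "BB * (1/2)^n * exp (- lam * s) \<le> BB * (1/2)^n * 1"
    using BB_nonneg by (intro mult_left_mono) auto
  then show ?thesis using P_bound[OF \<open>t \<le> T\<close>, of n s] by simp
next
  case False
  then show ?thesis using P_zero[of s t "Suc n"] BB_nonneg by simp
qed

lemma geo_summable: "summable (\<lambda>n. c * (1/2::real)^n)"
  by (intro summable_mult summable_geometric) simp

lemma P_summable: "t \<le> T \<Longrightarrow> summable (\<lambda>n. Hsh \<xi> T (Suc n) t s)"
  by (rule summable_comparison_test'[OF geo_summable[of BB], of 0]) (simp add: P_bound')

lemma Gres_bound: "t \<le> T \<Longrightarrow> \<bar>Gres \<xi> T t s\<bar> \<le> 2 * BB"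
proof -
  assume t: "t \<le> T"
  have "\<bar>Gres \<xi> T t s\<bar> \<le> (\<Sum>n. \<bar>Hsh \<xi> T (Suc n) t s\<bar>)"
    unfolding Gres_def
    by (rule summable_rabs[OF summable_comparison_test'[OF geo_summable[of BB], of 0]]) (simp add: P_bound' t)
  also have "\<dots> \<le> (\<Sum>n. BB * (1/2)^n)"
    by (intro suminf_le P_bound' t geo_summable summable_comparison_test'[OF geo_summable[of BB], of 0]) (simp add: P_bound' t)
  also have "\<dots> = 2 * BB" by (simp add: suminf_mult suminf_geometric[of "1/2::real"])
  finally show ?thesis .
qed

lemma Gres_zero: "\<not> (0 < s \<and> s < t) \<Longrightarrow> Gres \<xi> T t s = 0"
  by (simp add: Gres_def P_zero)

lemma Gres_meas[measurable]: "t \<le> T \<Longrightarrow> (\<lambda>s. Gres \<xi> T t s) \<in> borel_measurable lborel"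
  unfolding Gres_def
  by (rule borel_measurable_LIMSEQ_real[OF summable_LIMSEQ[OF P_summable]]) (auto intro!: borel_measurable_sum)

lemma integrable_step:
  assumes "g \<in> borel_measurable lborel" "\<And>z. \<bar>g z\<bar> \<le> C"
  shows "integrable lborel (\<lambda>z. indicator {0..T} z *\<^sub>R (g z * H1 \<xi> z s))"
proof -
  have C0: "0 \<le> C" using assms(2)[of 0] by linarith
  have "(\<integral>\<^sup>+ z. ennreal (norm (indicator {0..T} z *\<^sub>R (g z * H1 \<xi> z s))) \<partial>lborel) \<le> (\<integral>\<^sup>+ z. ennreal C * (indicator {0..T} z * ennreal (kk z s)) \<partial>lborel)"
  proof (intro nn_integral_mono)
    fix z
    have b: "\<bar>g z * H1 \<xi> z s\<bar> \<le> C * kk z s"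
      unfolding abs_mult using assms(2) H1_bound C0 by (intro mult_mono) auto
    show "ennreal (norm (indicator {0..T} z *\<^sub>R (g z * H1 \<xi> z s))) \<le> ennreal C * (indicator {0..T} z * ennreal (kk z s))"
    proof (cases "z \<in> {0..T}")
      case True
      have "ennreal (norm (indicator {0..T} z *\<^sub>R (g z * H1 \<xi> z s))) = ennreal \<bar>g z * H1 \<xi> z s\<bar>"
        using True by simp
      also have "\<dots> \<le> ennreal (C * kk z s)" by (rule ennreal_leI[OF b])
      also have "\<dots> = ennreal C * ennreal (kk z s)" using C0 kk_nonneg by (rule ennreal_mult)
      finally show ?thesis using True by simp
    qed simp
  qed
  also have "\<dots> = ennreal C * (\<integral>\<^sup>+ z. indicator {0..T} z * ennreal (kk z s) \<partial>lborel)"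
    by (intro nn_integral_cmult) auto
  also have "\<dots> \<le> ennreal C * ennreal (exp (lam * T) / 2)"
    by (intro mult_left_mono kk_int) auto
  also have "\<dots> < \<infinity>" by (simp add: ennreal_mult_less_top)
  finally have fin: "(\<integral>\<^sup>+ z. ennreal (norm (indicator {0..T} z *\<^sub>R (g z * H1 \<xi> z s))) \<partial>lborel) < \<infinity>" .
  have m: "(\<lambda>z. indicator {0..T} z *\<^sub>R (g z * H1 \<xi> z s)) \<in> borel_measurable lborel"
    using assms(1) unfolding H1_def kernK_def indicator_def greaterThanLessThan_iff by measurable
  show ?thesis using fin m by (simp add: integrable_iff_bounded)
qed

lemma integrable_step0:
  "integrable lborel (\<lambda>z. indicator {0..T} z *\<^sub>R (H1 \<xi> t z * H1 \<xi> z s))"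
proof -
  have "(\<integral>\<^sup>+ z. ennreal (norm (indicator {0..T} z *\<^sub>R (H1 \<xi> t z * H1 \<xi> z s))) \<partial>lborel) \<le> (\<integral>\<^sup>+ z. ennreal (kk t z * kk z s) \<partial>lborel)"
  proof (intro nn_integral_mono)
    fix z
    have b: "\<bar>H1 \<xi> t z * H1 \<xi> z s\<bar> \<le> kk t z * kk z s"
      unfolding abs_mult by (intro mult_mono H1_bound kk_nonneg) auto
    have "norm (indicator {0..T} z *\<^sub>R (H1 \<xi> t z * H1 \<xi> z s)) \<le> \<bar>H1 \<xi> t z * H1 \<xi> z s\<bar>"
      by (simp add: indicator_def)
    then show "ennreal (norm (indicator {0..T} z *\<^sub>R (H1 \<xi> t z * H1 \<xi> z s))) \<le> ennreal (kk t z * kk z s)"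
      using b by (intro ennreal_leI) linarith
  qed
  also have "\<dots> \<le> ennreal (6 * M\<^sup>2)" by (rule B0)
  also have "\<dots> < \<infinity>" by simp
  finally have fin: "(\<integral>\<^sup>+ z. ennreal (norm (indicator {0..T} z *\<^sub>R (H1 \<xi> t z * H1 \<xi> z s))) \<partial>lborel) < \<infinity>" .
  have m: "(\<lambda>z. indicator {0..T} z *\<^sub>R (H1 \<xi> t z * H1 \<xi> z s)) \<in> borel_measurable lborel"
    unfolding H1_def kernK_def indicator_def greaterThanLessThan_iff by measurable
  show ?thesis using fin m by (simp add: integrable_iff_bounded)
qed

end



context kset2
begin

lemma INT:
  assumes "t \<le> T"
  shows "integrable lborel (\<lambda>z. indicator {0..T} z *\<^sub>R (Hsh \<xi> T n t z * H1 \<xi> z s))"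
proof (cases n)
  case 0
  then show ?thesis using integrable_step0[of t s] by simp
next
  case (Suc m)
  show ?thesis unfolding Suc
    by (rule integrable_step[OF P_meas P_bound'[OF assms]])
qed

lemma rec_pt:
  assumes "t \<le> T" "t' \<le> T"
  shows "ennreal \<bar>Hsh \<xi> T (Suc n) t s - Hsh \<xi> T (Suc n) t' s\<bar>
     \<le> (\<integral>\<^sup>+ z. indicator {0..T} z * ennreal (\<bar>Hsh \<xi> T n t z - Hsh \<xi> T n t' z\<bar> * kk z s) \<partial>lborel)"
proof -
  have "Hsh \<xi> T (Suc n) t s - Hsh \<xi> T (Suc n) t' s
      = (\<integral>z. indicator {0..T} z *\<^sub>R (Hsh \<xi> T n t z * H1 \<xi> z s) \<partial>lborel) - (\<integral>z. indicator {0..T} z *\<^sub>R (Hsh \<xi> T n t' z * H1 \<xi> z s) \<partial>lborel)"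
    by (simp add: Hsh.simps(2) set_lebesgue_integral_def)
  also have "\<dots> = (\<integral>z. indicator {0..T} z *\<^sub>R (Hsh \<xi> T n t z * H1 \<xi> z s) - indicator {0..T} z *\<^sub>R (Hsh \<xi> T n t' z * H1 \<xi> z s) \<partial>lborel)"
    by (rule Bochner_Integration.integral_diff[OF INT[OF assms(1)] INT[OF assms(2)], symmetric])
  also have "\<dots> = (LINT z:{0..T}|lborel. (Hsh \<xi> T n t z - Hsh \<xi> T n t' z) * H1 \<xi> z s)"
    unfolding set_lebesgue_integral_def by (intro Bochner_Integration.integral_cong refl) (simp add: algebra_simps)
  finally have eq: "Hsh \<xi> T (Suc n) t s - Hsh \<xi> T (Suc n) t' s = (LINT z:{0..T}|lborel. (Hsh \<xi> T n t z - Hsh \<xi> T n t' z) * H1 \<xi> z s)" .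
  show ?thesis unfolding eq by (rule LINT_abs_le)
qed

lemma tonelli_step:
  assumes g[measurable]: "g \<in> borel_measurable lborel" and g0: "\<And>z. 0 \<le> g z"
  shows "(\<integral>\<^sup>+ s. (\<integral>\<^sup>+ z. indicator {0..T} z * ennreal (g z * kk z s) \<partial>lborel) * ennreal (exp (lam * s)) \<partial>lborel)
     \<le> ennreal (1/2) * (\<integral>\<^sup>+ z. ennreal (g z) * ennreal (exp (lam * z)) \<partial>lborel)"
proof -
  have "(\<integral>\<^sup>+ s. (\<integral>\<^sup>+ z. indicator {0..T} z * ennreal (g z * kk z s) \<partial>lborel) * ennreal (exp (lam * s)) \<partial>lborel)
      = (\<integral>\<^sup>+ s. (\<integral>\<^sup>+ z. indicator {0..T} z * ennreal (g z * kk z s) * ennreal (exp (lam * s)) \<partial>lborel) \<partial>lborel)"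
    by (intro nn_integral_cong nn_integral_multc[symmetric]) measurable
  also have "\<dots> = (\<integral>\<^sup>+ z. (\<integral>\<^sup>+ s. indicator {0..T} z * ennreal (g z * kk z s) * ennreal (exp (lam * s)) \<partial>lborel) \<partial>lborel)"
    by (rule lborel_pair.Fubini') measurable
  also have "\<dots> \<le> (\<integral>\<^sup>+ z. ennreal (1/2) * (ennreal (g z) * ennreal (exp (lam * z))) \<partial>lborel)"
  proof (intro nn_integral_mono)
    fix z
    show "(\<integral>\<^sup>+ s. indicator {0..T} z * ennreal (g z * kk z s) * ennreal (exp (lam * s)) \<partial>lborel)
        \<le> ennreal (1/2) * (ennreal (g z) * ennreal (exp (lam * z)))"
    proof (cases "z \<in> {0..T}")
      case False
      then show ?thesis by simp
    next
      case True
      have "(\<integral>\<^sup>+ s. indicator {0..T} z * ennreal (g z * kk z s) * ennreal (exp (lam * s)) \<partial>lborel)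
          = (\<integral>\<^sup>+ s. ennreal (g z * exp (lam * z)) * ennreal (kk z s * exp (- lam * (z - s))) \<partial>lborel)"
      proof (intro nn_integral_cong)
        fix s
        have "g z * kk z s * exp (lam * s) = g z * exp (lam * z) * (kk z s * exp (- lam * (z - s)))"
          by (simp add: exp_add[symmetric] algebra_simps)
        then show "indicator {0..T} z * ennreal (g z * kk z s) * ennreal (exp (lam * s)) = ennreal (g z * exp (lam * z)) * ennreal (kk z s * exp (- lam * (z - s)))"
          using True g0[of z] kk_nonneg[of z s] by (simp add: ennreal_mult[symmetric])
      qed
      also have "\<dots> = ennreal (g z * exp (lam * z)) * (\<integral>\<^sup>+ s. ennreal (kk z s * exp (- lam * (z - s))) \<partial>lborel)"
        by (rule nn_integral_cmult) measurable
      also have "\<dots> \<le> ennreal (g z * exp (lam * z)) * ennreal (1/2)"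
        using True by (intro mult_left_mono KL2) auto
      also have "\<dots> = ennreal (1/2) * (ennreal (g z) * ennreal (exp (lam * z)))"
        using g0[of z] by (simp add: ennreal_mult mult_ac)
      finally show ?thesis .
    qed
  qed
  also have "\<dots> = ennreal (1/2) * (\<integral>\<^sup>+ z. ennreal (g z) * ennreal (exp (lam * z)) \<partial>lborel)"
    by (rule nn_integral_cmult) measurable
  finally show ?thesis .
qed

end



context kset2
begin

definition WW :: "real \<Rightarrow> real \<Rightarrow> nat \<Rightarrow> ennreal" where
  "WW t t' n = (\<integral>\<^sup>+ s. ennreal \<bar>Hsh \<xi> T n t s - Hsh \<xi> T n t' s\<bar> * ennreal (exp (lam * s)) \<partial>lborel)"

lemma W_step:
  assumes "t \<le> T" "t' \<le> T"
  shows "WW t t' (Suc n) \<le> ennreal (1/2) * WW t t' n"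
proof -
  have "WW t t' (Suc n) \<le> (\<integral>\<^sup>+ s. (\<integral>\<^sup>+ z. indicator {0..T} z * ennreal (\<bar>Hsh \<xi> T n t z - Hsh \<xi> T n t' z\<bar> * kk z s) \<partial>lborel) * ennreal (exp (lam * s)) \<partial>lborel)"
    unfolding WW_def by (intro nn_integral_mono mult_right_mono rec_pt assms) simp
  also have "\<dots> \<le> ennreal (1/2) * (\<integral>\<^sup>+ z. ennreal \<bar>Hsh \<xi> T n t z - Hsh \<xi> T n t' z\<bar> * ennreal (exp (lam * z)) \<partial>lborel)"
    by (rule tonelli_step) auto
  finally show ?thesis unfolding WW_def .
qed

lemma W_pow:
  assumes "t \<le> T" "t' \<le> T"
  shows "WW t t' n \<le> ennreal ((1/2)^n) * WW t t' 0"
proof (induction n)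
  case 0
  then show ?case by simp
next
  case (Suc n)
  have "WW t t' (Suc n) \<le> ennreal (1/2) * WW t t' n" by (rule W_step[OF assms])
  also have "\<dots> \<le> ennreal (1/2) * (ennreal ((1/2)^n) * WW t t' 0)"
    by (intro mult_left_mono Suc.IH) simp
  also have "\<dots> = (ennreal (1/2) * ennreal ((1/2)^n)) * WW t t' 0"
    by (simp only: mult.assoc)
  also have "ennreal (1/2) * ennreal ((1/2)^n) = ennreal ((1/2::real)^Suc n)"
    by (subst ennreal_mult[symmetric]) auto

  finally show ?case .
qed

lemma W0_bound:
  assumes t': "0 \<le> t'" "t' < t" and tT: "t \<le> T"
  shows "WW t t' 0 \<le> ennreal (exp (lam * T) * ((8 * M + 2 * M^3 * T) * sqrt (t - t')))"
proof -
  have "WW t t' 0 \<le> (\<integral>\<^sup>+ s. ennreal (exp (lam * T)) * ennreal \<bar>H1 \<xi> t s - H1 \<xi> t' s\<bar> \<partial>lborel)"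
    unfolding WW_def
  proof (intro nn_integral_mono)
    fix s
    show "ennreal \<bar>Hsh \<xi> T 0 t s - Hsh \<xi> T 0 t' s\<bar> * ennreal (exp (lam * s)) \<le> ennreal (exp (lam * T)) * ennreal \<bar>H1 \<xi> t s - H1 \<xi> t' s\<bar>"
    proof (cases "0 < s \<and> s < t")
      case True
      have "exp (lam * s) \<le> exp (lam * T)" using True tT lam by (auto intro: mult_left_mono)
      then have "ennreal (exp (lam * s)) \<le> ennreal (exp (lam * T))" by (rule ennreal_leI)
      then have "ennreal (exp (lam * s)) * ennreal \<bar>H1 \<xi> t s - H1 \<xi> t' s\<bar> \<le> ennreal (exp (lam * T)) * ennreal \<bar>H1 \<xi> t s - H1 \<xi> t' s\<bar>"
        by (rule mult_right_mono) simp
      then show ?thesis by (simp add: ac_simps)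
    next
      case False
      then have "H1 \<xi> t s = 0" "H1 \<xi> t' s = 0" using t' by (auto simp: H1_zero)
      then show ?thesis by simp
    qed
  qed
  also have "\<dots> = ennreal (exp (lam * T)) * (\<integral>\<^sup>+ s. ennreal \<bar>H1 \<xi> t s - H1 \<xi> t' s\<bar> \<partial>lborel)"
    by (rule nn_integral_cmult) measurable
  also have "\<dots> \<le> ennreal (exp (lam * T)) * ennreal ((8 * M + 2 * M^3 * T) * sqrt (t - t'))"
    by (intro mult_left_mono D0 assms) simp
  also have "\<dots> = ennreal (exp (lam * T) * ((8 * M + 2 * M^3 * T) * sqrt (t - t')))"
    by (rule ennreal_mult[symmetric]) (use M_pos T_pos t' in auto)
  finally show ?thesis .
qed

lemma diff_summable:
  assumes "t \<le> T" "t' \<le> T"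
  shows "summable (\<lambda>n. \<bar>Hsh \<xi> T (Suc n) t s - Hsh \<xi> T (Suc n) t' s\<bar>)"
proof (rule summable_comparison_test'[OF geo_summable[of "2 * BB"], of 0])
  fix n :: nat
  have "\<bar>Hsh \<xi> T (Suc n) t s - Hsh \<xi> T (Suc n) t' s\<bar> \<le> \<bar>Hsh \<xi> T (Suc n) t s\<bar> + \<bar>Hsh \<xi> T (Suc n) t' s\<bar>"
    by (rule abs_triangle_ineq4)
  also have "\<dots> \<le> BB * (1/2)^n + BB * (1/2)^n" by (intro add_mono P_bound' assms)
  finally show "norm \<bar>Hsh \<xi> T (Suc n) t s - Hsh \<xi> T (Suc n) t' s\<bar> \<le> 2 * BB * (1/2)^n" by simp
qed

lemma Gdiff:
  assumes "t \<le> T" "t' \<le> T"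
  shows "(\<integral>\<^sup>+ s. ennreal \<bar>Gres \<xi> T t s - Gres \<xi> T t' s\<bar> \<partial>lborel) \<le> WW t t' 0"
proof -
  let ?D = "\<lambda>n s. \<bar>Hsh \<xi> T (Suc n) t s - Hsh \<xi> T (Suc n) t' s\<bar>"
  have pw: "ennreal \<bar>Gres \<xi> T t s - Gres \<xi> T t' s\<bar> \<le> (\<Sum>n. ennreal (?D n s))" for s
  proof -
    have "Gres \<xi> T t s - Gres \<xi> T t' s = (\<Sum>n. Hsh \<xi> T (Suc n) t s - Hsh \<xi> T (Suc n) t' s)"
      unfolding Gres_def by (rule suminf_diff[OF P_summable P_summable]) (use assms in auto)
    also have "\<bar>\<dots>\<bar> \<le> (\<Sum>n. ?D n s)" by (rule summable_rabs[OF diff_summable[OF assms]])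
    finally have "\<bar>Gres \<xi> T t s - Gres \<xi> T t' s\<bar> \<le> (\<Sum>n. ?D n s)" .
    then have "ennreal \<bar>Gres \<xi> T t s - Gres \<xi> T t' s\<bar> \<le> ennreal (\<Sum>n. ?D n s)" by (rule ennreal_leI)
    also have "\<dots> = (\<Sum>n. ennreal (?D n s))"
      by (rule suminf_ennreal2[symmetric]) (auto intro: diff_summable[OF assms])
    finally show ?thesis .
  qed
  have Dle: "(\<integral>\<^sup>+ s. ennreal (?D n s) \<partial>lborel) \<le> WW t t' (Suc n)" for n
    unfolding WW_def
  proof (intro nn_integral_mono)
    fix s
    show "ennreal (?D n s) \<le> ennreal (?D n s) * ennreal (exp (lam * s))"
    proof (cases "0 < s")
      case True
      have "1 \<le> exp (lam * s)" using True lam by simp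
      then have "ennreal (?D n s) * 1 \<le> ennreal (?D n s) * ennreal (exp (lam * s))"
        by (intro mult_left_mono ennreal_leI) auto
      then show ?thesis by simp
    next
      case False
      then show ?thesis using P_zero[of s t "Suc n"] P_zero[of s t' "Suc n"] by simp
    qed
  qed
  have "(\<integral>\<^sup>+ s. ennreal \<bar>Gres \<xi> T t s - Gres \<xi> T t' s\<bar> \<partial>lborel) \<le> (\<integral>\<^sup>+ s. (\<Sum>n. ennreal (?D n s)) \<partial>lborel)"
    by (intro nn_integral_mono pw)
  also have "\<dots> = (\<Sum>n. \<integral>\<^sup>+ s. ennreal (?D n s) \<partial>lborel)"
    by (rule nn_integral_suminf) measurable
  also have "\<dots> \<le> (\<Sum>n. ennreal ((1/2)^Suc n) * WW t t' 0)"
    by (intro suminf_le order_trans[OF Dle W_pow[OF assms]] summableI)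
  also have "\<dots> = (\<Sum>n. ennreal ((1/2)^Suc n)) * WW t t' 0" by simp
  also have "(\<Sum>n. ennreal ((1/2::real)^Suc n)) = ennreal 1"
  proof (rule suminf_ennreal_eq)
    show "(\<lambda>n. (1/2::real)^Suc n) sums 1"
      using sums_mult[OF geometric_sums[of "1/2::real"], of "1/2"] by simp
  qed simp
  finally show ?thesis by simp
qed

end



context kset2
begin

lemma v_repr:
  assumes "t \<le> T"
  shows "(LINT s:{0..t}|lborel. Gres \<xi> T t s * f s) = (\<integral>s. Gres \<xi> T t s * f s \<partial>lborel)"
  unfolding set_lebesgue_integral_def
proof (intro Bochner_Integration.integral_cong refl)
  fix s
  show "indicator {0..t} s *\<^sub>R (Gres \<xi> T t s * f s) = Gres \<xi> T t s * f s"
  proof (cases "s \<in> {0..t}")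
    case False
    then have "Gres \<xi> T t s = 0" by (intro Gres_zero) auto
    then show ?thesis by simp
  qed simp
qed

lemma Gf_int:
  assumes t: "0 \<le> t" "t \<le> T" and fm[measurable]: "f \<in> borel_measurable lborel" and fb: "\<And>s. \<bar>f s\<bar> \<le> FF"
  shows "integrable lborel (\<lambda>s. Gres \<xi> T t s * f s)"
proof -
  have F0: "0 \<le> FF" using fb[of 0] by linarith
  have "(\<integral>\<^sup>+ s. ennreal (norm (Gres \<xi> T t s * f s)) \<partial>lborel) \<le> (\<integral>\<^sup>+ s. ennreal (2 * BB * FF) * indicator {0..T} s \<partial>lborel)"
  proof (intro nn_integral_mono)
    fix s
    show "ennreal (norm (Gres \<xi> T t s * f s)) \<le> ennreal (2 * BB * FF) * indicator {0..T} s"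
    proof (cases "0 < s \<and> s < t")
      case True
      have "\<bar>Gres \<xi> T t s * f s\<bar> \<le> 2 * BB * FF"
        unfolding abs_mult using Gres_bound[OF t(2)] fb BB_nonneg by (intro mult_mono) auto
      then show ?thesis using True t by (simp add: ennreal_leI)
    next
      case False
      then show ?thesis by (simp add: Gres_zero)
    qed
  qed
  also have "\<dots> = ennreal (2 * BB * FF) * emeasure lborel {0..T}"
    by (rule nn_integral_cmult_indicator) simp
  also have "\<dots> < \<infinity>" using T_pos by (simp add: ennreal_mult_less_top)
  finally show ?thesis using Gres_meas[OF t(2)] by (subst integrable_iff_bounded) auto
qed

lemma holder_est:
  assumes fm[measurable]: "f \<in> borel_measurable lborel" and fb: "\<And>s. \<bar>f s\<bar> \<le> FF"
    and t': "0 \<le> t'" "t' < t" and tT: "t \<le> T"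
  shows "\<bar>(LINT s:{0..t}|lborel. Gres \<xi> T t s * f s) - (LINT s:{0..t'}|lborel. Gres \<xi> T t' s * f s)\<bar>
     \<le> FF * (exp (lam * T) * ((8 * M + 2 * M^3 * T) * sqrt (t - t')))"
proof -
  have F0: "0 \<le> FF" using fb[of 0] by linarith
  have t'T: "t' \<le> T" using t' tT by simp
  have "(LINT s:{0..t}|lborel. Gres \<xi> T t s * f s) - (LINT s:{0..t'}|lborel. Gres \<xi> T t' s * f s)
      = (\<integral>s. Gres \<xi> T t s * f s \<partial>lborel) - (\<integral>s. Gres \<xi> T t' s * f s \<partial>lborel)"
    using v_repr[OF tT] v_repr[OF t'T] by simp
  also have "\<dots> = (\<integral>s. Gres \<xi> T t s * f s - Gres \<xi> T t' s * f s \<partial>lborel)"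
    by (rule Bochner_Integration.integral_diff[symmetric]; rule Gf_int) (use t' tT fb in auto)
  finally have eq: "(LINT s:{0..t}|lborel. Gres \<xi> T t s * f s) - (LINT s:{0..t'}|lborel. Gres \<xi> T t' s * f s)
      = (\<integral>s. Gres \<xi> T t s * f s - Gres \<xi> T t' s * f s \<partial>lborel)" .
  have "ennreal \<bar>(\<integral>s. Gres \<xi> T t s * f s - Gres \<xi> T t' s * f s \<partial>lborel)\<bar>
      \<le> (\<integral>\<^sup>+ s. ennreal \<bar>Gres \<xi> T t s * f s - Gres \<xi> T t' s * f s\<bar> \<partial>lborel)"
    by (rule abs_int_le)
  also have "\<dots> \<le> (\<integral>\<^sup>+ s. ennreal FF * ennreal \<bar>Gres \<xi> T t s - Gres \<xi> T t' s\<bar> \<partial>lborel)"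
  proof (intro nn_integral_mono)
    fix s
    have "\<bar>Gres \<xi> T t s * f s - Gres \<xi> T t' s * f s\<bar> = \<bar>Gres \<xi> T t s - Gres \<xi> T t' s\<bar> * \<bar>f s\<bar>"
      by (simp add: abs_mult[symmetric] algebra_simps)
    also have "\<dots> \<le> \<bar>Gres \<xi> T t s - Gres \<xi> T t' s\<bar> * FF" by (intro mult_left_mono fb) simp
    finally have "ennreal \<bar>Gres \<xi> T t s * f s - Gres \<xi> T t' s * f s\<bar> \<le> ennreal (FF * \<bar>Gres \<xi> T t s - Gres \<xi> T t' s\<bar>)"
      by (intro ennreal_leI) (simp add: mult.commute)
    also have "\<dots> = ennreal FF * ennreal \<bar>Gres \<xi> T t s - Gres \<xi> T t' s\<bar>"
      using F0 by (simp add: ennreal_mult)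
    finally show "ennreal \<bar>Gres \<xi> T t s * f s - Gres \<xi> T t' s * f s\<bar> \<le> ennreal FF * ennreal \<bar>Gres \<xi> T t s - Gres \<xi> T t' s\<bar>" .
  qed
  also have "\<dots> = ennreal FF * (\<integral>\<^sup>+ s. ennreal \<bar>Gres \<xi> T t s - Gres \<xi> T t' s\<bar> \<partial>lborel)"
  proof (intro nn_integral_cmult)
    note Gres_meas[OF tT, measurable] Gres_meas[OF t'T, measurable]
    show "(\<lambda>s. ennreal \<bar>Gres \<xi> T t s - Gres \<xi> T t' s\<bar>) \<in> borel_measurable lborel" by measurable
  qed
  also have "\<dots> \<le> ennreal FF * WW t t' 0"
    by (intro mult_left_mono Gdiff tT t'T) simp
  also have "\<dots> \<le> ennreal FF * ennreal (exp (lam * T) * ((8 * M + 2 * M^3 * T) * sqrt (t - t')))"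
    by (intro mult_left_mono W0_bound t' tT) simp
  also have "\<dots> = ennreal (FF * (exp (lam * T) * ((8 * M + 2 * M^3 * T) * sqrt (t - t'))))"
    by (rule ennreal_mult[symmetric]) (use F0 M_pos T_pos t' in auto)
  finally show ?thesis unfolding eq
    by (subst (asm) ennreal_le_iff) (use F0 M_pos T_pos t' in auto)
qed

end



lemma H1_cong:
  assumes "\<forall>x\<in>{0..T}. \<xi>1 x = \<xi>2 x" "z \<in> {0..T}"
  shows "H1 \<xi>1 z s = H1 \<xi>2 z s"
proof (cases "0 < s \<and> s < z")
  case True
  then have "\<xi>1 z = \<xi>2 z" "\<xi>1 s = \<xi>2 s" using assms by auto
  then show ?thesis by (simp add: H1_def kernK_def)
qed (simp add: H1_def)

lemma Hsh_cong:
  assumes "\<forall>x\<in>{0..T}. \<xi>1 x = \<xi>2 x" "t \<in> {0..T}"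
  shows "Hsh \<xi>1 T n t s = Hsh \<xi>2 T n t s"
proof (induction n arbitrary: s)
  case 0
  then show ?case using H1_cong[OF assms] by simp
next
  case (Suc n)
  show ?case unfolding Hsh.simps(2)
    by (rule set_lebesgue_integral_cong) (use Suc.IH H1_cong[OF assms(1)] in auto)
qed

lemma Gres_cong:
  assumes "\<forall>x\<in>{0..T}. \<xi>1 x = \<xi>2 x" "t \<in> {0..T}"
  shows "Gres \<xi>1 T t s = Gres \<xi>2 T t s"
  unfolding Gres_def using Hsh_cong[OF assms] by simp

lemma clamp_lip: "\<bar>max 0 (min T x) - max 0 (min T y)\<bar> \<le> \<bar>x - y\<bar>" for T x y :: real
  unfolding max_def min_def abs_if by auto

lemma hoelder_cont:
  fixes f :: "real \<Rightarrow> real"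
  assumes "\<forall>x\<in>S. \<forall>y\<in>S. \<bar>f x - f y\<bar> \<le> C * \<bar>x - y\<bar> powr (1/2)"
  shows "continuous_on S f"
proof (rule uniformly_continuous_imp_continuous, unfold uniformly_continuous_on_def, intro allI impI)
  fix e :: real assume e: "0 < e"
  define C' where "C' = \<bar>C\<bar> + 1"
  have C': "0 < C'" by (simp add: C'_def)
  define d where "d = (e / C')\<^sup>2"
  have d: "0 < d" using e C' by (simp add: d_def)
  show "\<exists>d>0. \<forall>x\<in>S. \<forall>x'\<in>S. dist x' x < d \<longrightarrow> dist (f x') (f x) < e"
  proof (intro exI[of _ d] conjI ballI impI d)
    fix x x' assume xs: "x \<in> S" "x' \<in> S" and dd: "dist x' x < d"
    have "\<bar>f x' - f x\<bar> \<le> C * \<bar>x' - x\<bar> powr (1/2)" using assms xs by auto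
    also have "\<dots> \<le> C' * \<bar>x' - x\<bar> powr (1/2)" by (intro mult_right_mono) (auto simp: C'_def)
    also have "\<bar>x' - x\<bar> powr (1/2) < d powr (1/2)"
      using dd by (intro powr_less_mono2) (auto simp: dist_real_def)
    then have "C' * \<bar>x' - x\<bar> powr (1/2) < C' * d powr (1/2)" using C' by simp
    also have "d powr (1/2) = e / C'" using e C' d by (simp add: powr_half_sqrt d_def)
    also have "C' * (e / C') = e" using C' by simp
    finally show "dist (f x') (f x) < e" by (simp add: dist_real_def)
  qed
qed

theorem lemma3p15:
  fixes T \<beta> :: real and \<xi> f :: "real \<Rightarrow> real"
  assumes "T > 0"
    and "\<beta> > 1/2"
    and "C1_hoelder_on \<beta> {0..T} \<xi>"
    and "hoelder_on (1/2) {0..T} f"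
  shows "hoelder_on (1/2) {0..T} (\<lambda>t. LINT s:{0..t}|lborel. Gres \<xi> T t s * f s)"
proof -
  have T0: "0 < T" using assms(1) .
  obtain \<xi>' where d: "\<forall>t\<in>{0..T}. (\<xi> has_real_derivative \<xi>' t) (at t within {0..T})"
    and hd: "hoelder_on \<beta> {0..T} \<xi>'"
    using assms(3) unfolding C1_hoelder_on_def by blast
  obtain Cd where Cd: "\<forall>x\<in>{0..T}. \<forall>y\<in>{0..T}. \<bar>\<xi>' x - \<xi>' y\<bar> \<le> Cd * \<bar>x - y\<bar> powr \<beta>"
    using hd unfolding hoelder_on_def by blast
  define M where "M = \<bar>\<xi>' 0\<bar> + \<bar>Cd\<bar> * T powr \<beta> + 1"
  have M0: "0 < M" unfolding M_def by (simp add: add_nonneg_pos)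
  have bd: "\<bar>\<xi>' x\<bar> \<le> M" if x: "x \<in> {0..T}" for x
  proof -
    have "\<bar>\<xi>' x - \<xi>' 0\<bar> \<le> Cd * \<bar>x - 0\<bar> powr \<beta>" using Cd[rule_format, of x 0] x T0 by auto
    also have "\<dots> \<le> \<bar>Cd\<bar> * \<bar>x - 0\<bar> powr \<beta>" by (intro mult_right_mono) auto
    also have "\<dots> \<le> \<bar>Cd\<bar> * T powr \<beta>"
      using x assms(2) by (intro mult_left_mono powr_mono2) auto
    finally have "\<bar>\<xi>' x - \<xi>' 0\<bar> \<le> \<bar>Cd\<bar> * T powr \<beta>" .
    then show ?thesis unfolding M_def by linarith
  qed
  have lipT: "\<bar>\<xi> x - \<xi> y\<bar> \<le> M * \<bar>x - y\<bar>" if "x \<in> {0..T}" "y \<in> {0..T}" for x y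
    using field_differentiable_bound[of "{0..T}" \<xi> \<xi>' M x y] d bd that by auto
  define \<xi>c where "\<xi>c x = \<xi> (max 0 (min T x))" for x
  have eqxi: "\<forall>x\<in>{0..T}. \<xi> x = \<xi>c x" by (auto simp: \<xi>c_def)
  have lipc: "\<bar>\<xi>c x - \<xi>c y\<bar> \<le> M * \<bar>x - y\<bar>" for x y
  proof -
    have "\<bar>\<xi>c x - \<xi>c y\<bar> \<le> M * \<bar>max 0 (min T x) - max 0 (min T y)\<bar>"
      unfolding \<xi>c_def using T0 by (intro lipT) auto
    also have "\<dots> \<le> M * \<bar>x - y\<bar>" using M0 by (intro mult_left_mono clamp_lip) auto
    finally show ?thesis .
  qed
  obtain Cf where Cf: "\<forall>x\<in>{0..T}. \<forall>y\<in>{0..T}. \<bar>f x - f y\<bar> \<le> Cf * \<bar>x - y\<bar> powr (1/2)"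
    using assms(4) unfolding hoelder_on_def by blast
  define FF where "FF = \<bar>f 0\<bar> + \<bar>Cf\<bar> * T powr (1/2)"
  define fc where "fc x = f (max 0 (min T x))" for x
  have eqf: "\<forall>x\<in>{0..T}. f x = fc x" by (auto simp: fc_def)
  have fcont: "continuous_on {0..T} f" by (rule hoelder_cont[OF Cf])
  have fccont: "continuous_on UNIV fc"
    unfolding fc_def
    by (rule continuous_on_compose2[OF fcont]) (use T0 in \<open>auto intro!: continuous_intros\<close>)
  have fcm: "fc \<in> borel_measurable lborel"
    using borel_measurable_continuous_onI[OF fccont] by simp
  have fb: "\<bar>fc x\<bar> \<le> FF" for x
  proof -
    have x: "max 0 (min T x) \<in> {0..T}" using T0 by auto
    have "\<bar>f (max 0 (min T x)) - f 0\<bar> \<le> Cf * \<bar>max 0 (min T x) - 0\<bar> powr (1/2)" using Cf[rule_format, of "max 0 (min T x)" 0] x T0 by auto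
    also have "\<dots> \<le> \<bar>Cf\<bar> * \<bar>max 0 (min T x) - 0\<bar> powr (1/2)" by (intro mult_right_mono) auto
    also have "\<dots> \<le> \<bar>Cf\<bar> * T powr (1/2)"
      using x by (intro mult_left_mono powr_mono2) auto
    finally show ?thesis unfolding fc_def FF_def by linarith
  qed
  define a where "a = 1 / (64 * M\<^sup>2)"
  define X where "X = 32 * M\<^sup>2 * T"
  have X0: "0 < X" using M0 T0 by (simp add: X_def)
  define lam where "lam = \<bar>ln X\<bar> / a"
  have a0: "0 < a" using M0 by (simp add: a_def)
  have sa: "sqrt a = 1 / (8 * M)"
  proof -
    have "sqrt (64 * M\<^sup>2) = 8 * M" using M0 by (simp add: real_sqrt_mult)
    then show ?thesis by (simp add: a_def real_sqrt_divide)
  qed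
  interpret K: kset2 \<xi>c T M lam a
  proof unfold_locales
    show "0 < T" by (rule T0)
    show "0 < M" by (rule M0)
    show "\<bar>\<xi>c x - \<xi>c y\<bar> \<le> M * \<bar>x - y\<bar>" for x y by (rule lipc)
    show "0 \<le> lam" using a0 by (simp add: lam_def)
    show "0 < a" by (rule a0)
    show "2 * M * sqrt a \<le> 1/4" using M0 by (simp add: sa)
    show "M / sqrt a * exp (- lam * a) * T \<le> 1/4"
    proof -
      have la: "lam * a = \<bar>ln X\<bar>" using a0 by (simp add: lam_def)
      have "exp (- lam * a) \<le> exp (- ln X)" using la by simp
      also have "\<dots> = 1 / X" using X0 by (simp add: exp_minus inverse_eq_divide)
      finally have e: "exp (- lam * a) \<le> 1 / X" .
      have "M / sqrt a * exp (- lam * a) * T = (8 * M\<^sup>2 * T) * exp (- lam * a)"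
        by (simp add: sa power2_eq_square)
      also have "\<dots> \<le> (8 * M\<^sup>2 * T) * (1 / X)" using e T0 by (intro mult_left_mono) auto
      also have "\<dots> = 1/4" using M0 T0 by (simp add: X_def)
      finally show ?thesis .
    qed
  qed
  define K where "K = FF * (exp (lam * T) * (8 * M + 2 * M^3 * T))"
  have veq: "(LINT s:{0..t}|lborel. Gres \<xi> T t s * f s) = (LINT s:{0..t}|lborel. Gres \<xi>c T t s * fc s)"
    if t: "t \<in> {0..T}" for t
  proof (rule set_lebesgue_integral_cong)
    show "\<forall>s. s \<in> {0..t} \<longrightarrow> Gres \<xi> T t s * f s = Gres \<xi>c T t s * fc s"
      using Gres_cong[OF eqxi t] eqf t by auto
  qed simp
  have est: "\<bar>(LINT s:{0..t}|lborel. Gres \<xi> T t s * f s) - (LINT s:{0..t'}|lborel. Gres \<xi> T t' s * f s)\<bar>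
      \<le> K * \<bar>t - t'\<bar> powr (1/2)" if t': "0 \<le> t'" "t' < t" and tT: "t \<le> T" for t t'
  proof -
    have "\<bar>(LINT s:{0..t}|lborel. Gres \<xi>c T t s * fc s) - (LINT s:{0..t'}|lborel. Gres \<xi>c T t' s * fc s)\<bar>
        \<le> FF * (exp (lam * T) * ((8 * M + 2 * M^3 * T) * sqrt (t - t')))"
      by (rule K.holder_est[OF fcm fb t' tT])
    moreover have "FF * (exp (lam * T) * ((8 * M + 2 * M^3 * T) * sqrt (t - t'))) = K * \<bar>t - t'\<bar> powr (1/2)"
      using t' by (simp add: K_def powr_half_sqrt)
    ultimately show ?thesis using veq[of t] veq[of t'] t' tT by simp
  qed
  show ?thesis unfolding hoelder_on_def
  proof (intro exI[of _ K] ballI)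
    fix x y assume x: "x \<in> {0..T}" and y: "y \<in> {0..T}"
    consider "y < x" | "x = y" | "x < y" by linarith
    then show "\<bar>(LINT s:{0..x}|lborel. Gres \<xi> T x s * f s) - (LINT s:{0..y}|lborel. Gres \<xi> T y s * f s)\<bar> \<le> K * \<bar>x - y\<bar> powr (1/2)"
    proof cases
      case 1
      then show ?thesis using est[of y x] x y by auto
    next
      case 2
      then show ?thesis by simp
    next
      case 3
      then show ?thesis using est[of x y] x y by (auto simp: abs_minus_commute)
    qed
  qed
qed


end
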